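(* Let $W$ be an irreducible finite Weyl group with (connected) Dynkin diagram $\Gamma$. For any nested set $\mathcal{N}$ on $\Gamma$, the element $w(\mathcal{N})=\prod_{J\in\mathcal{N}}w_0(J)$, with the product taken in a monotonic order of $\mathcal{N}$, is separable.
   Context: $\Phi$ is a finite crystallographic root system with simple roots $\Delta$, positive roots $\Phi^+$, Weyl group $W=W(\Phi)$; $I_\Phi(w)=\{\beta\in\Phi^+:w\beta\in-\Phi^+\}$. For $J\subseteq\Delta$, $W_J$ is the parabolic subgroup generated by $\{s_\alpha:\alpha\in J\}$ and $w_0(J)$ its longest element. Root poset: $\beta\leq\beta'$ iff $\beta'-\beta$ is a nonnegative combination of simple roots. $\Phi_J$ is the set of roots in the span of $J$; for a subsystem $\Phi'=\Phi\cap V$, $w|_{\Phi'}\in W(\Phi')$ is the element with inversion set $I_\Phi(w)\cap V$. $w$ is separable if (S1) $\Phi$ has type $A_1$; or (S2) $\Phi=\bigoplus\Phi_i$ is reducible and each $w|_{\Phi_i}$ is separable; or (S3) $\Phi$ is irreducible and some $\alpha_i\in\Delta$ has $w|_{\Phi_{\Delta\setminus\{\alpha_i\}}}$ separable and either $\{\beta\in\Phi^+:\beta\geq\alpha_i\}\subseteq I_\Phi(w)$ or this set is disjoint from $I_\Phi(w)$. The Dynkin diagram $\Gamma$ is the simple graph on $\Delta$ with an edge between $\alpha,\alpha'$ whenever $s_\alpha,s_{\alpha'}$ do not commute. A nested set on $\Gamma$ is a collection $\mathcal{N}$ of vertex subsets satisfying (N1) each $J\in\mathcal{N}$ induces a connected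 subgraph; (N2) any two elements are nested or disjoint; (N3) the union of any $k\geq2$ pairwise disjoint elements induces a disconnected subgraph. A total order on $\mathcal{N}$ is monotonic if $J$ comes after $I$ whenever $J\subseteq I$. *)

theory Defs
  imports "HOL-Analysis.Analysis"
begin

definition rrefl :: "'a::euclidean_space \<Rightarrow> 'a \<Rightarrow> 'a" where
  "rrefl a x = x - (2 * (x \<bullet> a) / (a \<bullet> a)) *\<^sub>R a"

definition root_system :: "'a::euclidean_space set \<Rightarrow> bool" where
  "root_system \<Phi> \<longleftrightarrow> finite \<Phi> \<and> 0 \<notin> \<Phi>
     \<and> (\<forall>a\<in>\<Phi>. \<forall>b\<in>\<Phi>. rrefl a b \<in> \<Phi>)
     \<and> (\<forall>a\<in>\<Phi>. \<forall>b\<in>\<Phi>. 2 * (b \<bullet> a) / (a \<bullet> a) \<in> \<int>)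
     \<and> (\<forall>a\<in>\<Phi>. \<forall>c::real. c *\<^sub>R a \<in> \<Phi> \<longrightarrow> c = 1 \<or> c = -1)"

definition is_base :: "'a::euclidean_space set \<Rightarrow> 'a set \<Rightarrow> bool" where
  "is_base \<Phi> \<Delta> \<longleftrightarrow> \<Delta> \<subseteq> \<Phi> \<and> independent \<Delta>
     \<and> (\<forall>b\<in>\<Phi>. \<exists>c. (\<forall>a\<in>\<Delta>. c a \<in> \<int>)
            \<and> ((\<forall>a\<in>\<Delta>. c a \<ge> 0) \<or> (\<forall>a\<in>\<Delta>. c a \<le> 0))
            \<and> b = (\<Sum>a\<in>\<Delta>. c a *\<^sub>R a))"

definition nonneg_comb :: "'a::euclidean_space set \<Rightarrow> 'a \<Rightarrow> bool" where
  "nonneg_comb \<Delta> v \<longleftrightarrow> (\<exists>c. (\<forall>a\<in>\<Delta>. c a \<ge> 0) \<and> v = (\<Sum>a\<in>\<Delta>. c a *\<^sub>R a))"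

definition pos_roots :: "'a::euclidean_space set \<Rightarrow> 'a set \<Rightarrow> 'a set" where
  "pos_roots \<Phi> \<Delta> = {b \<in> \<Phi>. nonneg_comb \<Delta> b}"

definition root_le :: "'a::euclidean_space set \<Rightarrow> 'a \<Rightarrow> 'a \<Rightarrow> bool" where
  "root_le \<Delta> b b' \<longleftrightarrow> nonneg_comb \<Delta> (b' - b)"

definition inv_set :: "'a::euclidean_space set \<Rightarrow> 'a set \<Rightarrow> ('a \<Rightarrow> 'a) \<Rightarrow> 'a set" where
  "inv_set \<Phi> \<Delta> w = {b \<in> pos_roots \<Phi> \<Delta>. - (w b) \<in> pos_roots \<Phi> \<Delta>}"

definition dyn_edge :: "'a::euclidean_space \<Rightarrow> 'a \<Rightarrow> bool" where
  "dyn_edge a b \<longleftrightarrow> a \<noteq> b \<and> rrefl a \<circ> rrefl b \<noteq> rrefl b \<circ> rrefl a"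

definition dyn_connected :: "'a::euclidean_space set \<Rightarrow> bool" where
  "dyn_connected S \<longleftrightarrow> S \<noteq> {} \<and>
     (\<forall>x\<in>S. \<forall>y\<in>S. (x, y) \<in> {(a, b). a \<in> S \<and> b \<in> S \<and> dyn_edge a b}\<^sup>*)"

definition dyn_components :: "'a::euclidean_space set \<Rightarrow> 'a set set" where
  "dyn_components D = {C. C \<subseteq> D \<and> dyn_connected C \<and>
      (\<forall>E. C \<subseteq> E \<and> E \<subseteq> D \<and> dyn_connected E \<longrightarrow> E = C)}"

text \<open>sep_set Phi Delta N: the element of W(Phi) whose inversion set is N is separable.
  Restrictions to parabolic subsystems Phi cap span J (with simple roots J) are
  encoded by intersecting the inversion set with span J.\<close>
inductive sep_set :: "'a::euclidean_space set \<Rightarrow> 'a set \<Rightarrow> 'a set \<Rightarrow> bool" where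
  S1: "card \<Delta> = 1 \<Longrightarrow> sep_set \<Phi> \<Delta> N"
| S2: "\<Delta> \<noteq> {} \<Longrightarrow> \<not> dyn_connected \<Delta> \<Longrightarrow>
       (\<forall>C\<in>dyn_components \<Delta>. sep_set (\<Phi> \<inter> span C) C (N \<inter> span C)) \<Longrightarrow>
       sep_set \<Phi> \<Delta> N"
| S3: "dyn_connected \<Delta> \<Longrightarrow> a \<in> \<Delta> \<Longrightarrow>
       sep_set (\<Phi> \<inter> span (\<Delta> - {a})) (\<Delta> - {a}) (N \<inter> span (\<Delta> - {a})) \<Longrightarrow>
       ({b \<in> pos_roots \<Phi> \<Delta>. root_le \<Delta> a b} \<subseteq> N \<or>
        {b \<in> pos_roots \<Phi> \<Delta>. root_le \<Delta> a b} \<inter> N = {}) \<Longrightarrow>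
       sep_set \<Phi> \<Delta> N"

definition separable :: "'a::euclidean_space set \<Rightarrow> 'a set \<Rightarrow> ('a \<Rightarrow> 'a) \<Rightarrow> bool" where
  "separable \<Phi> \<Delta> w \<longleftrightarrow> sep_set \<Phi> \<Delta> (inv_set \<Phi> \<Delta> w)"

definition weyl_word :: "'a::euclidean_space list \<Rightarrow> 'a \<Rightarrow> 'a" where
  "weyl_word xs = foldr (\<lambda>a f. rrefl a \<circ> f) xs id"

definition parabolic :: "'a::euclidean_space set \<Rightarrow> ('a \<Rightarrow> 'a) set" where
  "parabolic J = {weyl_word xs | xs. set xs \<subseteq> J}"

definition cox_length :: "'a::euclidean_space set \<Rightarrow> ('a \<Rightarrow> 'a) \<Rightarrow> nat" where
  "cox_length J w = (LEAST n. \<exists>xs. set xs \<subseteq> J \<and> length xs = n \<and> weyl_word xs = w)"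

definition longest :: "'a::euclidean_space set \<Rightarrow> 'a \<Rightarrow> 'a" where
  "longest J = (THE w. w \<in> parabolic J \<and> (\<forall>v\<in>parabolic J. cox_length J v \<le> cox_length J w))"

definition nested_set :: "'a::euclidean_space set \<Rightarrow> 'a set set \<Rightarrow> bool" where
  "nested_set \<Delta> \<N> \<longleftrightarrow>
     (\<forall>J\<in>\<N>. J \<subseteq> \<Delta> \<and> dyn_connected J)
   \<and> (\<forall>I\<in>\<N>. \<forall>J\<in>\<N>. I \<subseteq> J \<or> J \<subseteq> I \<or> I \<inter> J = {})
   \<and> (\<forall>K \<subseteq> \<N>. 2 \<le> card K \<and> (\<forall>I\<in>K. \<forall>J\<in>K. I \<noteq> J \<longrightarrow> I \<inter> J = {})
        \<longrightarrow> \<not> dyn_connected (\<Union>K))"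

definition monotonic_order :: "'a set list \<Rightarrow> 'a set set \<Rightarrow> bool" where
  "monotonic_order Js \<N> \<longleftrightarrow> distinct Js \<and> set Js = \<N> \<and>
     (\<forall>i < length Js. \<forall>j < length Js. i \<noteq> j \<and> Js ! j \<subseteq> Js ! i \<longrightarrow> i < j)"

definition nested_product :: "'a::euclidean_space set list \<Rightarrow> 'a \<Rightarrow> 'a" where
  "nested_product Js = foldr (\<lambda>J f. longest J \<circ> f) Js id"

end

theory Submission
  imports Defs
begin

lemma finite_indep: "independent (S::'a::euclidean_space set) \<Longrightarrow> finite S"
  using independent_bound_general by blast

lemma coef_unique0: fixes D :: "'a::euclidean_space set"
  assumes "finite D" "independent D"
  "(\<Sum>a\<in>D. c a *\<^sub>R a) = (\<Sum>a\<in>D. c' a *\<^sub>R a)" "a \<in> D"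
  shows "c a = c' a"
proof (rule ccontr)
  assume ne: "c a \<noteq> c' a"
  have 1: "(\<Sum>a\<in>D. (c a - c' a) *\<^sub>R a) = 0"
    using assms(3) by (simp add: scaleR_diff_left sum_subtractf)
  have 2: "\<exists>v\<in>D. c v - c' v \<noteq> 0" using ne assms(4) by auto
  have "dependent D" unfolding dependent_finite[OF assms(1)]
    by (rule exI[of _ "\<lambda>a. c a - c' a"]) (use 1 2 in simp)
  then show False using assms(2) by simp
qed

locale rs =
  fixes \<Phi> \<Delta> :: "'a::euclidean_space set"
  assumes RS: "root_system \<Phi>" and BS: "is_base \<Phi> \<Delta>"
begin

abbreviation "P \<equiv> pos_roots \<Phi> \<Delta>"

lemma fin_D: "finite \<Delta>" using BS finite_indep unfolding is_base_def by blast
lemma indep: "independent \<Delta>" using BS unfolding is_base_def by blast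
lemma D_sub: "\<Delta> \<subseteq> \<Phi>" using BS unfolding is_base_def by blast
lemma fin_Phi: "finite \<Phi>" using RS unfolding root_system_def by blast
lemma zero_nPhi: "0 \<notin> \<Phi>" using RS unfolding root_system_def by blast
lemma refl_Phi: "a \<in> \<Phi> \<Longrightarrow> b \<in> \<Phi> \<Longrightarrow> rrefl a b \<in> \<Phi>" using RS unfolding root_system_def by blast
lemma reduced: "a \<in> \<Phi> \<Longrightarrow> c *\<^sub>R a \<in> \<Phi> \<Longrightarrow> c = 1 \<or> c = -1" using RS unfolding root_system_def by blast
lemma neg_Phi: "a \<in> \<Phi> \<Longrightarrow> -a \<in> \<Phi>"
proof -
  assume a: "a \<in> \<Phi>"
  have "a \<bullet> a \<noteq> 0" using a zero_nPhi by auto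
  moreover have "a - 2 *\<^sub>R a = -a" by (simp add: scaleR_2)
  ultimately have "rrefl a a = -a" by (simp add: rrefl_def)
  then show ?thesis using refl_Phi[OF a a] by simp
qed

lemma coef_unique:
  assumes "(\<Sum>a\<in>\<Delta>. c a *\<^sub>R a) = (\<Sum>a\<in>\<Delta>. c' a *\<^sub>R a)" "a \<in> \<Delta>"
  shows "c a = c' a"
  using coef_unique0[OF fin_D indep assms] .

definition cf :: "'a \<Rightarrow> 'a \<Rightarrow> real" where
  "cf x = (SOME c. x = (\<Sum>a\<in>\<Delta>. c a *\<^sub>R a))"

lemma span_D_ex: "x \<in> span \<Delta> \<Longrightarrow> \<exists>c. x = (\<Sum>a\<in>\<Delta>. c a *\<^sub>R a)"
  using span_finite[OF fin_D] by auto

lemma cf_sum: "x \<in> span \<Delta> \<Longrightarrow> x = (\<Sum>a\<in>\<Delta>. cf x a *\<^sub>R a)"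
  unfolding cf_def using someI_ex[OF span_D_ex] by blast

lemma cf_eq: "x = (\<Sum>a\<in>\<Delta>. c a *\<^sub>R a) \<Longrightarrow> a \<in> \<Delta> \<Longrightarrow> cf x a = c a"
proof -
  assume x: "x = (\<Sum>a\<in>\<Delta>. c a *\<^sub>R a)" and a: "a \<in> \<Delta>"
  have "x \<in> span \<Delta>" using x by (simp add: span_base span_scale span_sum)
  have e: "(\<Sum>a\<in>\<Delta>. cf x a *\<^sub>R a) = (\<Sum>a\<in>\<Delta>. c a *\<^sub>R a)"
    by (rule trans[OF sym[OF cf_sum[OF \<open>x \<in> span \<Delta>\<close>]] x])
  show ?thesis using coef_unique[OF e a] .
qed

lemma cf_add: "x \<in> span \<Delta> \<Longrightarrow> y \<in> span \<Delta> \<Longrightarrow> a \<in> \<Delta> \<Longrightarrow> cf (x + y) a = cf x a + cf y a"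
proof -
  assume x: "x \<in> span \<Delta>" and y: "y \<in> span \<Delta>" and a: "a \<in> \<Delta>"
  have "(\<Sum>d\<in>\<Delta>. (cf x d + cf y d) *\<^sub>R d) = (\<Sum>d\<in>\<Delta>. cf x d *\<^sub>R d) + (\<Sum>d\<in>\<Delta>. cf y d *\<^sub>R d)"
    by (simp add: scaleR_add_left sum.distrib)
  also have "\<dots> = x + y" using cf_sum[OF x, symmetric] cf_sum[OF y, symmetric] by simp
  finally show ?thesis using cf_eq[OF _ a, of "x+y" "\<lambda>d. cf x d + cf y d"] by simp
qed

lemma cf_scale: "x \<in> span \<Delta> \<Longrightarrow> a \<in> \<Delta> \<Longrightarrow> cf (t *\<^sub>R x) a = t * cf x a"
proof -
  assume x: "x \<in> span \<Delta>" and a: "a \<in> \<Delta>"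
  have "(\<Sum>d\<in>\<Delta>. (t * cf x d) *\<^sub>R d) = t *\<^sub>R (\<Sum>d\<in>\<Delta>. cf x d *\<^sub>R d)"
    by (simp add: scaleR_right.sum)
  also have "\<dots> = t *\<^sub>R x" using cf_sum[OF x, symmetric] by simp
  finally show ?thesis using cf_eq[OF _ a, of "t *\<^sub>R x" "\<lambda>d. t * cf x d"] by simp
qed

lemma cf_neg: "x \<in> span \<Delta> \<Longrightarrow> a \<in> \<Delta> \<Longrightarrow> cf (- x) a = - cf x a"
  using cf_scale[of x a "-1"] by simp

lemma cf_diff: "x \<in> span \<Delta> \<Longrightarrow> y \<in> span \<Delta> \<Longrightarrow> a \<in> \<Delta> \<Longrightarrow> cf (x - y) a = cf x a - cf y a"
  using cf_add[of x "-y" a] cf_neg[of y a] by (simp add: span_neg)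

lemma cf_base: "b \<in> \<Delta> \<Longrightarrow> a \<in> \<Delta> \<Longrightarrow> cf b a = (if a = b then 1 else 0)"
proof -
  assume b: "b \<in> \<Delta>" and a: "a \<in> \<Delta>"
  have "(\<Sum>d\<in>\<Delta>. (if d = b then 1 else 0) *\<^sub>R d) = (\<Sum>d\<in>\<Delta>. if d = b then d else 0)"
    by (rule sum.cong) auto
  also have "\<dots> = b" using b fin_D by (simp add: sum.delta)
  finally have "b = (\<Sum>d\<in>\<Delta>. (if d = b then 1 else 0) *\<^sub>R d)" by simp
  from cf_eq[OF this a] show ?thesis by auto
qed

lemma span_sub_cf: assumes "J \<subseteq> \<Delta>" "x \<in> span J" "a \<in> \<Delta> - J" shows "cf x a = 0"
proof -
  have fJ: "finite J" using assms(1) fin_D finite_subset by blast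
  obtain c where c: "x = (\<Sum>d\<in>J. c d *\<^sub>R d)" using span_finite[OF fJ] assms(2) by auto
  have "(\<Sum>d\<in>\<Delta>. (if d \<in> J then c d else 0) *\<^sub>R d) = (\<Sum>d\<in>J. (if d \<in> J then c d else 0) *\<^sub>R d)"
    using assms(1) fin_D by (intro sum.mono_neutral_right) auto
  also have "\<dots> = x" unfolding c by (rule sum.cong) auto
  finally have "x = (\<Sum>d\<in>\<Delta>. (if d \<in> J then c d else 0) *\<^sub>R d)" by simp
  from cf_eq[OF this] assms(3) show ?thesis by auto
qed

lemma cf_span_sub: assumes "J \<subseteq> \<Delta>" "x \<in> span \<Delta>" "\<forall>a\<in>\<Delta> - J. cf x a = 0" shows "x \<in> span J"
proof -
  have "(\<Sum>a\<in>\<Delta>. cf x a *\<^sub>R a) = (\<Sum>a\<in>J. cf x a *\<^sub>R a)"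
    using assms(1,3) fin_D by (intro sum.mono_neutral_right) auto
  moreover have "(\<Sum>a\<in>J. cf x a *\<^sub>R a) \<in> span J" by (intro span_sum span_scale span_base)
  ultimately show ?thesis using cf_sum[OF assms(2)] by simp
qed

lemma Phi_span: "\<Phi> \<subseteq> span \<Delta>"
proof
  fix b assume "b \<in> \<Phi>"
  then obtain c where "b = (\<Sum>a\<in>\<Delta>. c a *\<^sub>R a)" using BS unfolding is_base_def by blast
  then show "b \<in> span \<Delta>" by (simp add: span_base span_scale span_sum)
qed

lemma Phi_cf_sign: "b \<in> \<Phi> \<Longrightarrow> (\<forall>a\<in>\<Delta>. cf b a \<ge> 0) \<or> (\<forall>a\<in>\<Delta>. cf b a \<le> 0)"
proof -
  assume b: "b \<in> \<Phi>"
  then obtain c where c: "(\<forall>a\<in>\<Delta>. c a \<ge> 0) \<or> (\<forall>a\<in>\<Delta>. c a \<le> 0)" "b = (\<Sum>a\<in>\<Delta>. c a *\<^sub>R a)"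
    using BS unfolding is_base_def by blast
  then show ?thesis using cf_eq[OF c(2)] by auto
qed

lemma nonneg_comb_cf: assumes x: "x \<in> span \<Delta>"
  shows "nonneg_comb \<Delta> x \<longleftrightarrow> (\<forall>a\<in>\<Delta>. cf x a \<ge> 0)"
proof
  assume "nonneg_comb \<Delta> x"
  then obtain c where c: "\<forall>a\<in>\<Delta>. c a \<ge> 0" "x = (\<Sum>a\<in>\<Delta>. c a *\<^sub>R a)"
    unfolding nonneg_comb_def by blast
  show "\<forall>a\<in>\<Delta>. cf x a \<ge> 0"
  proof
    fix a assume a: "a \<in> \<Delta>"
    show "cf x a \<ge> 0" using cf_eq[OF c(2) a] c(1) a by simp
  qed
next
  assume "\<forall>a\<in>\<Delta>. cf x a \<ge> 0"
  then show "nonneg_comb \<Delta> x" unfolding nonneg_comb_def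
    by (intro exI[of _ "cf x"] conjI cf_sum x)
qed

lemma P_cf: "b \<in> P \<longleftrightarrow> b \<in> \<Phi> \<and> (\<forall>a\<in>\<Delta>. cf b a \<ge> 0)"
proof
  assume "b \<in> P"
  then have "b \<in> \<Phi>" "nonneg_comb \<Delta> b" unfolding pos_roots_def by auto
  then show "b \<in> \<Phi> \<and> (\<forall>a\<in>\<Delta>. cf b a \<ge> 0)" using nonneg_comb_cf Phi_span by blast
next
  assume "b \<in> \<Phi> \<and> (\<forall>a\<in>\<Delta>. cf b a \<ge> 0)"
  then show "b \<in> P" unfolding pos_roots_def using nonneg_comb_cf Phi_span by blast
qed

lemma cf_zero: assumes x: "x \<in> span \<Delta>" and z: "\<forall>a\<in>\<Delta>. cf x a = 0" shows "x = 0"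
proof -
  have "(\<Sum>a\<in>\<Delta>. cf x a *\<^sub>R a) = 0" using z by simp
  then show ?thesis using cf_sum[OF x] by simp
qed

lemma pos_by_cf: assumes b: "b \<in> \<Phi>" "a \<in> \<Delta>" "cf b a > 0" shows "b \<in> P"
proof -
  have "\<forall>d\<in>\<Delta>. cf b d \<ge> 0"
  proof (rule ccontr)
    assume "\<not> (\<forall>d\<in>\<Delta>. cf b d \<ge> 0)"
    then have "\<forall>d\<in>\<Delta>. cf b d \<le> 0" using Phi_cf_sign[OF b(1)] by blast
    then show False using b by force
  qed
  then show ?thesis using P_cf b by blast
qed

lemma neg_by_cf: assumes b: "b \<in> \<Phi>" "a \<in> \<Delta>" "cf b a < 0" shows "-b \<in> P"
proof -
  have s: "b \<in> span \<Delta>" using b Phi_span by auto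
  have "\<forall>d\<in>\<Delta>. cf b d \<le> 0"
  proof (rule ccontr)
    assume "\<not> (\<forall>d\<in>\<Delta>. cf b d \<le> 0)"
    then have "\<forall>d\<in>\<Delta>. cf b d \<ge> 0" using Phi_cf_sign[OF b(1)] by blast
    then show False using b by force
  qed
  then have "\<forall>d\<in>\<Delta>. cf (-b) d \<ge> 0" using cf_neg[OF s] by simp
  then show ?thesis using P_cf neg_Phi[OF b(1)] by blast
qed

lemma dich: assumes b: "b \<in> \<Phi>" shows "b \<in> P \<or> -b \<in> P"
proof -
  have s: "b \<in> span \<Delta>" using b Phi_span by auto
  show ?thesis
  proof (cases "\<forall>a\<in>\<Delta>. cf b a \<ge> 0")
    case True then show ?thesis using P_cf b by blast
  next
    case False
    then have "\<forall>a\<in>\<Delta>. cf b a \<le> 0" using Phi_cf_sign[OF b] by blast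
    then have "\<forall>a\<in>\<Delta>. cf (-b) a \<ge> 0" using cf_neg[OF s] by simp
    then show ?thesis using P_cf neg_Phi[OF b] by blast
  qed
qed

lemma not_both: assumes b: "b \<in> P" "-b \<in> P" shows False
proof -
  have s: "b \<in> span \<Delta>" "b \<in> \<Phi>" using b Phi_span P_cf by auto
  have "\<forall>a\<in>\<Delta>. cf b a = 0"
  proof
    fix a assume a: "a \<in> \<Delta>"
    have "cf b a \<ge> 0" "cf (-b) a \<ge> 0" using b a P_cf by auto
    then show "cf b a = 0" using cf_neg[OF s(1) a] by simp
  qed
  then have "b = 0" using cf_zero s by blast
  then show False using s zero_nPhi by simp
qed

end

lemma linear_rrefl: "linear (rrefl a)"
  unfolding rrefl_def
  by (rule linearI) (simp_all add: inner_add_left inner_scaleR_left add_divide_distrib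
      scaleR_add_left scaleR_add_right algebra_simps)

lemma rrefl_inner: assumes "a \<noteq> 0" shows "rrefl a x \<bullet> rrefl a y = x \<bullet> y"
proof -
  have aa: "a \<bullet> a \<noteq> 0" using assms by simp
  show ?thesis unfolding rrefl_def
    using aa by (simp add: inner_diff_left inner_diff_right inner_commute field_simps power2_eq_square)
qed

lemma rrefl_self: "a \<noteq> 0 \<Longrightarrow> rrefl a a = -a"
proof -
  assume "a \<noteq> 0"
  then have "a \<bullet> a \<noteq> 0" by simp
  moreover have "a - 2 *\<^sub>R a = -a" by (simp add: scaleR_2)
  ultimately show "rrefl a a = -a" by (simp add: rrefl_def)
qed

lemma rrefl_orth: "x \<bullet> a = 0 \<Longrightarrow> rrefl a x = x"
  by (simp add: rrefl_def)

lemma rrefl_invol: assumes "a \<noteq> 0" shows "rrefl a (rrefl a x) = x"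
proof -
  have "rrefl a (rrefl a x) = rrefl a x - (2 * (rrefl a x \<bullet> a) / (a \<bullet> a)) *\<^sub>R a"
    by (simp add: rrefl_def)
  moreover have "rrefl a x \<bullet> a = - (x \<bullet> a)"
    using rrefl_inner[OF assms, of x a] rrefl_self[OF assms] by simp
  ultimately show ?thesis by (simp add: rrefl_def)
qed

lemma rrefl_diff_span: "rrefl a x - x \<in> span {a}"
  unfolding rrefl_def by (simp add: span_base span_scale span_neg)

lemma conj_rrefl:
  assumes "linear w" "\<And>x y. w x \<bullet> w y = x \<bullet> y"
  shows "w (rrefl a x) = rrefl (w a) (w x)"
  unfolding rrefl_def using assms by (simp add: linear_diff linear_scale)

lemma ww_Nil[simp]: "weyl_word [] = id" by (simp add: weyl_word_def)
lemma ww_Cons: "weyl_word (a # xs) = rrefl a \<circ> weyl_word xs" by (simp add: weyl_word_def)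
lemma ww_Cons_app: "weyl_word (a # xs) x = rrefl a (weyl_word xs x)" by (simp add: weyl_word_def)
lemma ww_append: "weyl_word (xs @ ys) = weyl_word xs \<circ> weyl_word ys"
  by (induction xs) (simp_all add: ww_Cons o_assoc)
lemma ww_snoc: "weyl_word (xs @ [a]) x = weyl_word xs (rrefl a x)"
  by (simp add: ww_append ww_Cons)

lemma ww_linear: "linear (weyl_word xs)"
proof (induction xs)
  case Nil show ?case unfolding ww_Nil by (rule linear_id)
next
  case (Cons a xs) show ?case unfolding ww_Cons by (rule linear_compose[OF Cons linear_rrefl])
qed

lemma ww_inner: "0 \<notin> set xs \<Longrightarrow> weyl_word xs x \<bullet> weyl_word xs y = x \<bullet> y"
  by (induction xs) (auto simp: ww_Cons_app rrefl_inner)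

lemma ww_rev: "0 \<notin> set xs \<Longrightarrow> weyl_word (rev xs) (weyl_word xs x) = x"
  by (induction xs arbitrary: x) (auto simp: ww_Cons_app ww_snoc rrefl_invol)

lemma ww_rev2: "0 \<notin> set xs \<Longrightarrow> weyl_word xs (weyl_word (rev xs) x) = x"
  using ww_rev[of "rev xs"] by simp

lemma ww_diff_span: "set xs \<subseteq> K \<Longrightarrow> weyl_word xs x - x \<in> span K"
proof (induction xs arbitrary: x)
  case Nil then show ?case by (simp add: span_zero)
next
  case (Cons a xs)
  have 1: "weyl_word xs x - x \<in> span K" using Cons by simp
  have "rrefl a (weyl_word xs x) - weyl_word xs x \<in> span {a}" by (rule rrefl_diff_span)
  then have 2: "rrefl a (weyl_word xs x) - weyl_word xs x \<in> span K"
    using Cons.prems span_mono[of "{a}" K] by auto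
  have "weyl_word (a # xs) x - x = (rrefl a (weyl_word xs x) - weyl_word xs x) + (weyl_word xs x - x)"
    by (simp add: ww_Cons_app)
  then show ?case using 1 2 span_add by metis
qed

lemma ww_span: "set xs \<subseteq> K \<Longrightarrow> x \<in> span K \<Longrightarrow> weyl_word xs x \<in> span K"
proof -
  assume "set xs \<subseteq> K" "x \<in> span K"
  then have "weyl_word xs x - x \<in> span K" "x \<in> span K" using ww_diff_span by auto
  then have "(weyl_word xs x - x) + x \<in> span K" using span_add by blast
  then show ?thesis by simp
qed

lemma ww_orth: "set xs \<subseteq> K \<Longrightarrow> (\<forall>a\<in>K. x \<bullet> a = 0) \<Longrightarrow> weyl_word xs x = x"
  by (induction xs) (auto simp: ww_Cons_app rrefl_orth)

context rs begin

lemma ww_Phi: "set xs \<subseteq> \<Phi> \<Longrightarrow> b \<in> \<Phi> \<Longrightarrow> weyl_word xs b \<in> \<Phi>"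
  by (induction xs) (auto simp: ww_Cons_app refl_Phi)

lemma ww_cf: assumes "set xs \<subseteq> K" "K \<subseteq> \<Delta>" "x \<in> span \<Delta>" "d \<in> \<Delta> - K"
  shows "cf (weyl_word xs x) d = cf x d"
proof -
  have s: "weyl_word xs x - x \<in> span K" using ww_diff_span assms by blast
  have sK: "span K \<subseteq> span \<Delta>" using assms(2) span_mono by blast
  have "cf (weyl_word xs x - x) d = 0" using span_sub_cf[OF assms(2) s assms(4)] .
  moreover have "weyl_word xs x \<in> span \<Delta>" using ww_span[of xs \<Delta> x] assms by auto
  ultimately show ?thesis using cf_diff assms by auto
qed

end

context rs begin

abbreviation "I w \<equiv> inv_set \<Phi> \<Delta> w"

lemma zero_nD: "0 \<notin> \<Delta>" using D_sub zero_nPhi by blast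
lemma D_span: "\<Delta> \<subseteq> span \<Delta>" by (simp add: span_superset)
lemma fin_P: "finite P" using fin_Phi unfolding pos_roots_def by simp
lemma I_sub: "I w \<subseteq> P" unfolding inv_set_def by auto
lemma fin_I: "finite (I w)" using fin_P I_sub finite_subset by blast
lemma I_iff: "b \<in> I w \<longleftrightarrow> b \<in> P \<and> -(w b) \<in> P" unfolding inv_set_def by simp
lemma P_Phi: "b \<in> P \<Longrightarrow> b \<in> \<Phi>" unfolding pos_roots_def by simp
lemma D_P: "a \<in> \<Delta> \<Longrightarrow> a \<in> P"
  using P_cf cf_base D_sub by auto

lemma ww_PhiD: "set xs \<subseteq> \<Delta> \<Longrightarrow> b \<in> \<Phi> \<Longrightarrow> weyl_word xs b \<in> \<Phi>"
  using ww_Phi D_sub by blast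

lemma ww_innerD: "set xs \<subseteq> \<Delta> \<Longrightarrow> weyl_word xs x \<bullet> weyl_word xs y = x \<bullet> y"
  using ww_inner zero_nD by blast

lemma ww_neg: "weyl_word xs (- x) = - weyl_word xs x"
  using ww_linear linear_neg by blast

lemma simple_perm:
  assumes a: "a \<in> \<Delta>" and b: "b \<in> P" "b \<noteq> a"
  shows "rrefl a b \<in> P \<and> rrefl a b \<noteq> a"
proof -
  have bPhi: "b \<in> \<Phi>" using b P_Phi by blast
  have bs: "b \<in> span \<Delta>" using bPhi Phi_span by blast
  have as: "a \<in> span \<Delta>" using a D_span by blast
  have ex: "\<exists>d\<in>\<Delta>. d \<noteq> a \<and> cf b d > 0"
  proof (rule ccontr)
    assume "\<not> ?thesis"
    then have z: "\<forall>d\<in>\<Delta>. d \<noteq> a \<longrightarrow> cf b d = 0" using b P_cf by force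
    have "\<forall>d\<in>\<Delta>. cf (b - cf b a *\<^sub>R a) d = 0"
    proof
      fix d assume d: "d \<in> \<Delta>"
      have "cf (b - cf b a *\<^sub>R a) d = cf b d - cf b a * cf a d"
        using cf_diff[OF bs span_scale[OF as] d] cf_scale[OF as d] by simp
      then show "cf (b - cf b a *\<^sub>R a) d = 0" using z d cf_base[OF a d] by auto
    qed
    then have "b - cf b a *\<^sub>R a = 0" using cf_zero bs as by (meson span_diff span_scale)
    then have beq: "b = cf b a *\<^sub>R a" by simp
    then have "cf b a = 1 \<or> cf b a = -1" using reduced[of a "cf b a"] a D_sub bPhi by auto
    moreover have "cf b a \<ge> 0" using b a P_cf by blast
    ultimately have "cf b a = 1" by linarith
    then show False using beq b by simp
  qed
  then obtain d where d: "d \<in> \<Delta>" "d \<noteq> a" "cf b d > 0" by blast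
  have r: "rrefl a b = weyl_word [a] b" by (simp add: ww_Cons_app)
  have "cf (rrefl a b) d = cf b d" unfolding r
    by (rule ww_cf[of _ "{a}"]) (use a d bs in auto)
  then have c: "cf (rrefl a b) d > 0" using d by simp
  have "rrefl a b \<in> \<Phi>" using refl_Phi a D_sub bPhi by blast
  then have "rrefl a b \<in> P" using pos_by_cf c d by blast
  moreover have "rrefl a b \<noteq> a" using c cf_base[OF a d(1)] d by auto
  ultimately show ?thesis by blast
qed

lemma I_snoc_a:
  assumes xs: "set xs \<subseteq> \<Delta>" and a: "a \<in> \<Delta>"
  shows "a \<in> I (weyl_word (xs @ [a])) \<longleftrightarrow> a \<notin> I (weyl_word xs)"
proof -
  have "weyl_word (xs @ [a]) a = - weyl_word xs a"
    using ww_snoc rrefl_self zero_nD a ww_neg by metis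
  moreover have "weyl_word xs a \<in> \<Phi>" using ww_PhiD xs a D_sub by blast
  ultimately show ?thesis using I_iff D_P[OF a] dich not_both by (metis minus_minus)
qed

lemma I_snoc_rest:
  assumes xs: "set xs \<subseteq> \<Delta>" and a: "a \<in> \<Delta>"
  shows "rrefl a ` (I (weyl_word xs) - {a}) = I (weyl_word (xs @ [a])) - {a}"
proof
  have a0: "a \<noteq> 0" using a zero_nD by blast
  show "rrefl a ` (I (weyl_word xs) - {a}) \<subseteq> I (weyl_word (xs @ [a])) - {a}"
  proof
    fix c assume "c \<in> rrefl a ` (I (weyl_word xs) - {a})"
    then obtain b where b: "b \<in> I (weyl_word xs)" "b \<noteq> a" "c = rrefl a b" by blast
    have bP: "b \<in> P" "-(weyl_word xs b) \<in> P" using b I_iff by auto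
    have "c \<in> P" "c \<noteq> a" using simple_perm[OF a bP(1) b(2)] b by auto
    moreover have "weyl_word (xs @ [a]) c = weyl_word xs b" using b(3) ww_snoc rrefl_invol[OF a0] by metis
    ultimately show "c \<in> I (weyl_word (xs @ [a])) - {a}" using bP I_iff by auto
  qed
next
  have a0: "a \<noteq> 0" using a zero_nD by blast
  show "I (weyl_word (xs @ [a])) - {a} \<subseteq> rrefl a ` (I (weyl_word xs) - {a})"
  proof
    fix c assume c: "c \<in> I (weyl_word (xs @ [a])) - {a}"
    have cP: "c \<in> P" "-(weyl_word (xs @ [a]) c) \<in> P" "c \<noteq> a" using c I_iff by auto
    define b where "b = rrefl a c"
    have "b \<in> P" "b \<noteq> a" using simple_perm[OF a cP(1) cP(3)] b_def by auto
    moreover have "weyl_word xs b = weyl_word (xs @ [a]) c" using b_def ww_snoc by metis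
    moreover have "c = rrefl a b" using b_def rrefl_invol[OF a0] by simp
    ultimately show "c \<in> rrefl a ` (I (weyl_word xs) - {a})" using cP I_iff by auto
  qed
qed

lemma card_snoc_rest:
  assumes xs: "set xs \<subseteq> \<Delta>" and a: "a \<in> \<Delta>"
  shows "card (I (weyl_word (xs @ [a])) - {a}) = card (I (weyl_word xs) - {a})"
proof -
  have a0: "a \<noteq> 0" using a zero_nD by blast
  have "inj_on (rrefl a) (I (weyl_word xs) - {a})"
    by (rule inj_onI) (metis rrefl_invol[OF a0])
  then show ?thesis using I_snoc_rest[OF xs a] card_image by metis
qed

lemma n_snoc_pos:
  assumes xs: "set xs \<subseteq> \<Delta>" and a: "a \<in> \<Delta>" and p: "weyl_word xs a \<in> P"
  shows "card (I (weyl_word (xs @ [a]))) = card (I (weyl_word xs)) + 1"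
proof -
  have n1: "a \<notin> I (weyl_word xs)" using p I_iff not_both by blast
  then have n2: "a \<in> I (weyl_word (xs @ [a]))" using I_snoc_a[OF xs a] by blast
  have "card (I (weyl_word (xs @ [a]))) = card (I (weyl_word (xs @ [a])) - {a}) + 1"
    using card.remove[OF fin_I n2] by simp
  also have "\<dots> = card (I (weyl_word xs)) + 1" using card_snoc_rest[OF xs a] n1 by simp
  finally show ?thesis .
qed

lemma n_snoc_le:
  assumes xs: "set xs \<subseteq> \<Delta>" and a: "a \<in> \<Delta>"
  shows "card (I (weyl_word (xs @ [a]))) \<le> card (I (weyl_word xs)) + 1"
proof -
  have "card (I (weyl_word (xs @ [a]))) \<le> card (I (weyl_word (xs @ [a])) - {a}) + 1"
    using fin_I by (metis card_Diff1_le card_Suc_Diff1 le_refl Suc_eq_plus1 add.commute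
        le_add2 order_trans card_Diff_singleton_if)
  also have "\<dots> = card (I (weyl_word xs) - {a}) + 1" using card_snoc_rest[OF xs a] by simp
  also have "\<dots> \<le> card (I (weyl_word xs)) + 1" using fin_I by (simp add: card_Diff1_le)
  finally show ?thesis .
qed

lemma n_le_length: "set xs \<subseteq> \<Delta> \<Longrightarrow> card (I (weyl_word xs)) \<le> length xs"
proof (induction xs rule: rev_induct)
  case Nil
  have "I (weyl_word []) = {}" using I_iff not_both by auto
  then show ?case by (metis card.empty le_refl list.size(3))
next
  case (snoc a xs)
  then show ?case using n_snoc_le[of xs a] by force
qed

lemma deletion:
  "set xs \<subseteq> \<Delta> \<Longrightarrow> a \<in> \<Delta> \<Longrightarrow> -(weyl_word xs a) \<in> P \<Longrightarrow>
   \<exists>ys. set ys \<subseteq> set xs \<and> length ys + 1 = length xs \<and> weyl_word ys = weyl_word (xs @ [a])"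
proof (induction xs)
  case Nil
  then show ?case using D_P not_both by auto
next
  case (Cons x xs)
  have xD: "x \<in> \<Delta>" and xsD: "set xs \<subseteq> \<Delta>" using Cons.prems by auto
  show ?case
  proof (cases "-(weyl_word xs (a)) \<in> P")
    case True
    then obtain ys where ys: "set ys \<subseteq> set xs" "length ys + 1 = length xs"
        "weyl_word ys = weyl_word (xs @ [a])" using Cons xsD by blast
    show ?thesis
      by (rule exI[of _ "x # ys"]) (use ys in \<open>auto simp: ww_Cons\<close>)
  next
    case False
    have cPhi: "weyl_word xs a \<in> \<Phi>" using ww_PhiD xsD Cons.prems D_sub by blast
    then have cP: "weyl_word xs a \<in> P" using False dich by blast
    have neg: "-(rrefl x (weyl_word xs a)) \<in> P" using Cons.prems(3) by (simp add: ww_Cons_app)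
    have cx: "weyl_word xs a = x"
    proof (rule ccontr)
      assume "weyl_word xs a \<noteq> x"
      then have "rrefl x (weyl_word xs a) \<in> P" using simple_perm[OF xD cP] by blast
      then show False using neg not_both by blast
    qed
    have x0: "x \<noteq> 0" using xD zero_nD by blast
    have "weyl_word (x # xs @ [a]) = weyl_word xs"
    proof
      fix y
      have "weyl_word xs (rrefl a y) = rrefl (weyl_word xs a) (weyl_word xs y)"
        by (rule conj_rrefl[OF ww_linear ww_innerD[OF xsD]])
      then show "weyl_word (x # xs @ [a]) y = weyl_word xs y"
        using cx by (simp add: ww_Cons_app ww_snoc rrefl_invol[OF x0])
    qed
    then show ?thesis by (intro exI[of _ xs]) auto
  qed
qed

lemma L_le: "set xs \<subseteq> J \<Longrightarrow> cox_length J (weyl_word xs) \<le> length xs"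
  unfolding cox_length_def by (rule Least_le) blast

lemma L_ex: assumes "w \<in> parabolic J"
  shows "\<exists>xs. set xs \<subseteq> J \<and> length xs = cox_length J w \<and> weyl_word xs = w"
proof -
  obtain xs where "set xs \<subseteq> J" "weyl_word xs = w" using assms unfolding parabolic_def by blast
  then have "\<exists>n xs. set xs \<subseteq> J \<and> length xs = n \<and> weyl_word xs = w" by blast
  from LeastI_ex[OF this] show ?thesis unfolding cox_length_def .
qed

lemma reduced_n:
  "set xs \<subseteq> J \<Longrightarrow> J \<subseteq> \<Delta> \<Longrightarrow> length xs = cox_length J (weyl_word xs) \<Longrightarrow>
   card (I (weyl_word xs)) = length xs"
proof (induction xs rule: rev_induct)
  case Nil
  have "I (weyl_word []) = {}" using I_iff not_both by auto
  then show ?case by (metis card.empty le_refl list.size(3))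
next
  case (snoc a xs)
  have xsJ: "set xs \<subseteq> J" and aJ: "a \<in> J" using snoc.prems by auto
  have xsD: "set xs \<subseteq> \<Delta>" and aD: "a \<in> \<Delta>" using xsJ aJ snoc.prems by auto
  have red: "length xs = cox_length J (weyl_word xs)"
  proof (rule ccontr)
    assume "length xs \<noteq> cox_length J (weyl_word xs)"
    then have lt: "cox_length J (weyl_word xs) < length xs" using L_le[OF xsJ] by simp
    obtain ys where ys: "set ys \<subseteq> J" "length ys = cox_length J (weyl_word xs)" "weyl_word ys = weyl_word xs"
      using L_ex[of "weyl_word xs" J] xsJ unfolding parabolic_def by blast
    have "weyl_word (ys @ [a]) = weyl_word (xs @ [a])" using ys(3) by (simp add: ww_append)
    then have "cox_length J (weyl_word (xs @ [a])) \<le> length ys + 1"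
      using L_le[of "ys @ [a]" J] ys(1) aJ by simp
    then show False using snoc.prems(3) lt ys(2) by simp
  qed
  have pos: "weyl_word xs a \<in> P"
  proof (rule ccontr)
    assume "weyl_word xs a \<notin> P"
    then have "-(weyl_word xs a) \<in> P" using dich ww_PhiD xsD aD D_sub by blast
    then obtain ys where ys: "set ys \<subseteq> set xs" "length ys + 1 = length xs"
      "weyl_word ys = weyl_word (xs @ [a])" using deletion xsD aD by blast
    have "cox_length J (weyl_word (xs @ [a])) \<le> length ys"
      using L_le[of ys J] ys xsJ by auto
    then show False using snoc.prems(3) ys(2) by simp
  qed
  show ?case using n_snoc_pos[OF xsD aD pos] snoc.IH[OF xsJ snoc.prems(2) red] by simp
qed

lemma n_eq_L: assumes "w \<in> parabolic J" "J \<subseteq> \<Delta>" shows "card (I w) = cox_length J w"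
proof -
  obtain xs where xs: "set xs \<subseteq> J" "length xs = cox_length J w" "weyl_word xs = w"
    using L_ex[OF assms(1)] by blast
  show ?thesis using reduced_n[OF xs(1) assms(2)] xs by simp
qed

end

context rs begin

lemma cf_zero_vec: "a \<in> \<Delta> \<Longrightarrow> cf 0 a = 0"
  using cf_eq[of 0 "\<lambda>_. 0" a] by simp

lemma cf_lin_sum: "finite S \<Longrightarrow> (\<forall>i\<in>S. v i \<in> span \<Delta>) \<Longrightarrow> e \<in> \<Delta> \<Longrightarrow>
  cf (\<Sum>i\<in>S. t i *\<^sub>R v i) e = (\<Sum>i\<in>S. t i * cf (v i) e)"
proof (induction S rule: finite_induct)
  case empty then show ?case by (simp add: cf_zero_vec)
next
  case (insert x F)
  have s1: "t x *\<^sub>R v x \<in> span \<Delta>" using insert by (simp add: span_scale)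
  have s2: "(\<Sum>i\<in>F. t i *\<^sub>R v i) \<in> span \<Delta>" using insert by (simp add: span_sum span_scale)
  have "cf (\<Sum>i\<in>insert x F. t i *\<^sub>R v i) e = cf (t x *\<^sub>R v x + (\<Sum>i\<in>F. t i *\<^sub>R v i)) e"
    using insert by simp
  also have "\<dots> = t x * cf (v x) e + cf (\<Sum>i\<in>F. t i *\<^sub>R v i) e"
    using cf_add[OF s1 s2 insert(5)] cf_scale[of "v x" e "t x"] insert by simp
  also have "\<dots> = (\<Sum>i\<in>insert x F. t i * cf (v i) e)" using insert by simp
  finally show ?case .
qed

lemma span_J_sum: assumes "J \<subseteq> \<Delta>" "b \<in> span J" shows "b = (\<Sum>d\<in>J. cf b d *\<^sub>R d)"
proof -
  have bs: "b \<in> span \<Delta>" using assms span_mono by blast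
  have "(\<Sum>d\<in>\<Delta>. cf b d *\<^sub>R d) = (\<Sum>d\<in>J. cf b d *\<^sub>R d)"
    using assms fin_D span_sub_cf by (intro sum.mono_neutral_right) auto
  then show ?thesis using cf_sum[OF bs] by simp
qed

lemma neg_comb:
  assumes xs: "set xs \<subseteq> \<Delta>" and J: "J \<subseteq> \<Delta>"
    and sn: "\<forall>a\<in>J. -(weyl_word xs a) \<in> P" and b: "b \<in> P" "b \<in> span J"
  shows "-(weyl_word xs b) \<in> P"
proof -
  let ?w = "weyl_word xs"
  have fJ: "finite J" using J fin_D finite_subset by blast
  have "?w b = ?w (\<Sum>d\<in>J. cf b d *\<^sub>R d)" using span_J_sum[OF J b(2)] by simp
  also have "\<dots> = (\<Sum>d\<in>J. cf b d *\<^sub>R ?w d)"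
  proof -
    have "?w (\<Sum>d\<in>J. cf b d *\<^sub>R d) = (\<Sum>d\<in>J. ?w (cf b d *\<^sub>R d))"
      using linear_sum[OF ww_linear, of xs "\<lambda>d. cf b d *\<^sub>R d" J] by (simp add: o_def)
    also have "\<dots> = (\<Sum>d\<in>J. cf b d *\<^sub>R ?w d)"
      by (rule sum.cong[OF refl]) (rule linear_scale[OF ww_linear])
    finally show ?thesis .
  qed
  finally have eq: "-(?w b) = (\<Sum>d\<in>J. cf b d *\<^sub>R (-(?w d)))" by (simp add: sum_negf)
  have sp: "\<forall>d\<in>J. -(?w d) \<in> span \<Delta>" using sn P_Phi Phi_span by blast
  have cfe: "\<forall>e\<in>\<Delta>. cf (-(?w b)) e = (\<Sum>d\<in>J. cf b d * cf (-(?w d)) e)"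
  proof
    fix e assume e: "e \<in> \<Delta>"
    have "cf (-(?w b)) e = cf (\<Sum>d\<in>J. cf b d *\<^sub>R (-(?w d))) e" by (simp only: eq)
    also have "\<dots> = (\<Sum>d\<in>J. cf b d * cf (-(?w d)) e)"
      by (rule cf_lin_sum[OF fJ sp e])
    finally show "cf (-(?w b)) e = (\<Sum>d\<in>J. cf b d * cf (-(?w d)) e)" .
  qed
  have "\<forall>e\<in>\<Delta>. cf (-(?w b)) e \<ge> 0"
  proof
    fix e assume e: "e \<in> \<Delta>"
    have "\<forall>d\<in>J. cf b d * cf (-(?w d)) e \<ge> 0"
      using b(1) sn J e P_cf by (meson mult_nonneg_nonneg subsetD)
    then show "cf (-(?w b)) e \<ge> 0" using cfe e by (simp add: sum_nonneg)
  qed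
  moreover have "-(?w b) \<in> \<Phi>" using neg_Phi ww_PhiD xs b P_Phi by blast
  ultimately show ?thesis using P_cf by blast
qed

definition Q :: "'a set \<Rightarrow> ('a \<Rightarrow> 'a) \<Rightarrow> bool" where
  "Q J w \<longleftrightarrow> w \<in> parabolic J \<and> (\<forall>v\<in>parabolic J. cox_length J v \<le> cox_length J w)"

lemma par_snoc: "w \<in> parabolic J \<Longrightarrow> a \<in> J \<Longrightarrow> (\<exists>xs. set xs \<subseteq> J \<and> w = weyl_word xs \<and> weyl_word (xs @ [a]) \<in> parabolic J)"
proof -
  assume "w \<in> parabolic J" "a \<in> J"
  then obtain xs where xs: "set xs \<subseteq> J" "w = weyl_word xs" unfolding parabolic_def by blast
  have "weyl_word (xs @ [a]) \<in> parabolic J" unfolding parabolic_def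
    using xs \<open>a \<in> J\<close> by (intro CollectI exI[of _ "xs @ [a]"]) auto
  then show ?thesis using xs by blast
qed

lemma Q_simple_neg: assumes J: "J \<subseteq> \<Delta>" and Q: "Q J w" and a: "a \<in> J" shows "-(w a) \<in> P"
proof (rule ccontr)
  assume na: "-(w a) \<notin> P"
  obtain xs where xs: "set xs \<subseteq> J" "w = weyl_word xs" "weyl_word (xs @ [a]) \<in> parabolic J"
  proof -
    have "w \<in> parabolic J" using Q unfolding Q_def by blast
    from par_snoc[OF this a] show ?thesis using that by blast
  qed
  have xsD: "set xs \<subseteq> \<Delta>" and aD: "a \<in> \<Delta>" using xs J a by auto
  have "weyl_word xs a \<in> \<Phi>" using ww_PhiD[OF xsD] aD D_sub by blast
  then have "w a \<in> \<Phi>" using xs(2) by simp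
  then have "w a \<in> P" using na dich by blast
  then have "card (I (weyl_word (xs @ [a]))) = card (I w) + 1" using n_snoc_pos[OF xsD aD] xs by simp
  moreover have "card (I (weyl_word (xs @ [a]))) = cox_length J (weyl_word (xs @ [a]))"
    using n_eq_L[OF xs(3) J] .
  moreover have wp: "w \<in> parabolic J" using Q unfolding Q_def by blast
  moreover have "card (I w) = cox_length J w" using n_eq_L[OF wp J] .
  moreover have "cox_length J (weyl_word (xs @ [a])) \<le> cox_length J w"
    using Q xs(3) unfolding Q_def by blast
  ultimately show False by linarith
qed

lemma Q_neg: assumes J: "J \<subseteq> \<Delta>" and Q: "Q J w" and b: "b \<in> P" "b \<in> span J" shows "-(w b) \<in> P"
proof -
  obtain xs where xs: "set xs \<subseteq> J" "w = weyl_word xs" using Q unfolding Q_def parabolic_def by blast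
  show ?thesis using neg_comb[of xs J b] xs J b Q_simple_neg[OF J Q] by auto
qed

lemma par_id: "id \<in> parabolic J"
  unfolding parabolic_def by (rule CollectI, rule exI[of _ "[]"]) simp

lemma Q_ex: assumes J: "J \<subseteq> \<Delta>" shows "\<exists>w. Q J w"
proof -
  let ?S = "cox_length J ` parabolic J"
  have "?S \<subseteq> {..card P}"
  proof
    fix m assume "m \<in> ?S"
    then obtain v where v: "v \<in> parabolic J" "m = cox_length J v" by blast
    have "card (I v) \<le> card P" using card_mono[OF fin_P I_sub] .
    then show "m \<in> {..card P}" using n_eq_L[OF v(1) J] v by simp
  qed
  then have fS: "finite ?S" using finite_subset by blast
  have neS: "?S \<noteq> {}" using par_id by blast
  have "Max ?S \<in> ?S" using Max_in[OF fS neS] .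
  then obtain w where w: "w \<in> parabolic J" "cox_length J w = Max ?S" by auto
  have "\<forall>v\<in>parabolic J. cox_length J v \<le> cox_length J w" using w Max_ge[OF fS] by simp
  then show ?thesis using w unfolding Q_def by blast
qed

lemma Q_unique: assumes J: "J \<subseteq> \<Delta>" and Q1: "Q J w" and Q2: "Q J w'" shows "w' = w"
proof -
  obtain xs where xs: "set xs \<subseteq> J" "w = weyl_word xs" using Q1 unfolding Q_def parabolic_def by blast
  obtain ys where ys: "set ys \<subseteq> J" "w' = weyl_word ys" using Q2 unfolding Q_def parabolic_def by blast
  have xsD: "set xs \<subseteq> \<Delta>" "0 \<notin> set xs" using xs J zero_nD by auto
  have ysD: "set ys \<subseteq> \<Delta>" using ys J by auto
  define v where "v = weyl_word (rev xs @ ys)"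
  have vx: "\<And>x. v x = weyl_word (rev xs) (w' x)" unfolding v_def ys(2) by (simp add: ww_append)
  have vpar: "v \<in> parabolic J" unfolding v_def parabolic_def
    using xs ys by (intro CollectI exI[of _ "rev xs @ ys"]) auto
  have "I v = {}"
  proof (rule ccontr)
    assume "I v \<noteq> {}"
    then obtain b where b: "b \<in> P" "-(v b) \<in> P" using I_iff by blast
    have bPhi: "b \<in> \<Phi>" "b \<in> span \<Delta>" using b P_Phi Phi_span by auto
    show False
    proof (cases "b \<in> span J")
      case False
      have "\<not> (\<forall>a\<in>\<Delta> - J. cf b a = 0)" using cf_span_sub[OF J bPhi(2)] False by blast
      then obtain d where d: "d \<in> \<Delta> - J" "cf b d \<noteq> 0" by blast
      have "cf b d \<ge> 0" using b(1) d(1) unfolding P_cf by blast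
      then have "cf b d > 0" using d(2) by linarith
      moreover have "cf (v b) d = cf b d" unfolding v_def
        by (rule ww_cf[OF _ J bPhi(2) d(1)]) (use xs ys in auto)
      moreover have "v b \<in> \<Phi>" unfolding v_def
        by (rule ww_PhiD[OF _ bPhi(1)]) (use xsD ysD in auto)
      moreover have "d \<in> \<Delta>" using d by blast
      ultimately have "v b \<in> P" using pos_by_cf by simp
      then show False using b not_both by blast
    next
      case True
      let ?c = "w' b"
      have nc: "-?c \<in> P" using Q_neg[OF J Q2 b(1) True] .
      have cs: "?c \<in> span J" unfolding ys(2) by (rule ww_span[OF ys(1) True])
      define e where "e = -(weyl_word (rev xs) ?c)"
      have eP: "e \<in> P" using b(2) vx e_def by simp
      have es: "e \<in> span J" unfolding e_def using ww_span[of "rev xs" J ?c] xs cs span_neg by auto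
      have "-(w e) \<in> P" using Q_neg[OF J Q1 eP es] .
      moreover have "w e = - ?c" unfolding e_def xs(2) ww_neg ww_rev2[OF xsD(2)] by (rule refl)
      ultimately show False using nc not_both by simp
    qed
  qed
  then have "cox_length J v = 0" using n_eq_L[OF vpar J] by simp
  moreover obtain zs where zs: "set zs \<subseteq> J" "length zs = cox_length J v" "weyl_word zs = v"
    using L_ex[OF vpar] by blast
  ultimately have "zs = []" by simp
  then have vid: "v = id" using zs(3) by simp
  show ?thesis
  proof
    fix x
    have "v x = x" using vid by simp
    then have h: "weyl_word (rev xs) (w' x) = x" using vx[of x] by simp
    have "weyl_word xs (weyl_word (rev xs) (w' x)) = w' x" by (rule ww_rev2[OF xsD(2)])
    then have "w' x = weyl_word xs x" using h by simp
    then show "w' x = w x" using xs(2) by simp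
  qed
qed

lemma longest_Q: assumes J: "J \<subseteq> \<Delta>" shows "Q J (longest J)"
proof -
  have "\<exists>!w. Q J w" using Q_ex[OF J] Q_unique[OF J] by blast
  then show ?thesis unfolding longest_def Q_def[symmetric] by (rule theI')
qed

lemma longest_par: "J \<subseteq> \<Delta> \<Longrightarrow> longest J \<in> parabolic J"
  using longest_Q Q_def by blast

lemma longest_neg: "J \<subseteq> \<Delta> \<Longrightarrow> b \<in> P \<Longrightarrow> b \<in> span J \<Longrightarrow> -(longest J b) \<in> P"
  using longest_Q Q_neg by blast

end

lemma nonneg_span: "nonneg_comb D b \<Longrightarrow> b \<in> span D"
proof -
  assume "nonneg_comb D b"
  then obtain c where "b = (\<Sum>a\<in>D. c a *\<^sub>R a)" unfolding nonneg_comb_def by blast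
  moreover have "(\<Sum>a\<in>D. c a *\<^sub>R a) \<in> span D"
    by (rule span_sum) (rule span_scale, rule span_base)
  ultimately show ?thesis by simp
qed

lemma pos_roots_span: "b \<in> pos_roots \<Phi> D \<Longrightarrow> b \<in> \<Phi> \<and> b \<in> span D"
  unfolding pos_roots_def using nonneg_span by blast

lemma comp_sub: "C \<in> dyn_components D \<Longrightarrow> C \<subseteq> D"
  unfolding dyn_components_def by blast

lemma sep_inv:
  "sep_set \<Phi> D N \<Longrightarrow> N' \<inter> \<Phi> \<inter> span D = N \<inter> \<Phi> \<inter> span D \<Longrightarrow> sep_set \<Phi> D N'"
proof (induction arbitrary: N' rule: sep_set.induct)
  case (S1 \<Delta> \<Phi> N)
  show ?case using S1.hyps by (rule sep_set.S1)
next
  case (S2 \<Delta> \<Phi> N)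
  show ?case
  proof (rule sep_set.S2[OF S2(1,2)], rule ballI)
    fix C assume C: "C \<in> dyn_components \<Delta>"
    have sC: "span C \<subseteq> span \<Delta>" using comp_sub[OF C] span_mono by blast
    have "(N' \<inter> span C) \<inter> (\<Phi> \<inter> span C) \<inter> span C = (N \<inter> span C) \<inter> (\<Phi> \<inter> span C) \<inter> span C"
      using S2.prems sC by blast
    then show "sep_set (\<Phi> \<inter> span C) C (N' \<inter> span C)" using S2.IH C by blast
  qed
next
  case (S3 \<Delta> a \<Phi> N)
  have sC: "span (\<Delta> - {a}) \<subseteq> span \<Delta>" using span_mono by blast
  have "(N' \<inter> span (\<Delta> - {a})) \<inter> (\<Phi> \<inter> span (\<Delta> - {a})) \<inter> span (\<Delta> - {a})
      = (N \<inter> span (\<Delta> - {a})) \<inter> (\<Phi> \<inter> span (\<Delta> - {a})) \<inter> span (\<Delta> - {a})"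
    using S3.prems sC by blast
  then have r: "sep_set (\<Phi> \<inter> span (\<Delta> - {a})) (\<Delta> - {a}) (N' \<inter> span (\<Delta> - {a}))" using S3.IH by blast
  let ?U = "{b \<in> pos_roots \<Phi> \<Delta>. root_le \<Delta> a b}"
  have U: "?U \<subseteq> \<Phi> \<inter> span \<Delta>" using pos_roots_span by blast
  have "?U \<subseteq> N' \<or> ?U \<inter> N' = {}"
  proof (cases "?U \<subseteq> N")
    case True
    then have "?U \<subseteq> N'" using U S3.prems by blast
    then show ?thesis by blast
  next
    case False
    then have "?U \<inter> N = {}" using S3.hyps(4) by blast
    then have "?U \<inter> N' = {}" using U S3.prems by blast
    then show ?thesis by blast
  qed
  then show ?case using sep_set.S3[OF S3.hyps(1,2) r] by blast
qed

lemma pos_roots_mono_Phi: "\<Phi>' \<subseteq> \<Phi> \<Longrightarrow> pos_roots \<Phi>' C \<subseteq> pos_roots \<Phi> C"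
  unfolding pos_roots_def by blast

lemma sep_compl:
  "sep_set \<Phi> D N \<Longrightarrow> (\<forall>C\<subseteq>D. pos_roots \<Phi> C \<subseteq> X) \<Longrightarrow> sep_set \<Phi> D (X - N)"
proof (induction rule: sep_set.induct)
  case (S1 \<Delta> \<Phi> N)
  show ?case using S1.hyps by (rule sep_set.S1)
next
  case (S2 \<Delta> \<Phi> N)
  show ?case
  proof (rule sep_set.S2[OF S2(1,2)], rule ballI)
    fix C assume C: "C \<in> dyn_components \<Delta>"
    have CD: "C \<subseteq> \<Delta>" using comp_sub[OF C] .
    have "\<forall>C'\<subseteq>C. pos_roots (\<Phi> \<inter> span C) C' \<subseteq> X"
      using S2.prems CD pos_roots_mono_Phi[of "\<Phi> \<inter> span C" \<Phi>] by blast
    then have "sep_set (\<Phi> \<inter> span C) C (X - N \<inter> span C)" using S2.IH C by blast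
    moreover have "((X - N) \<inter> span C) \<inter> (\<Phi> \<inter> span C) \<inter> span C = (X - N \<inter> span C) \<inter> (\<Phi> \<inter> span C) \<inter> span C"
      by blast
    ultimately show "sep_set (\<Phi> \<inter> span C) C ((X - N) \<inter> span C)" using sep_inv by blast
  qed
next
  case (S3 \<Delta> a \<Phi> N)
  have "\<forall>C'\<subseteq>\<Delta> - {a}. pos_roots (\<Phi> \<inter> span (\<Delta> - {a})) C' \<subseteq> X"
    using S3.prems pos_roots_mono_Phi[of "\<Phi> \<inter> span (\<Delta> - {a})" \<Phi>] by blast
  then have "sep_set (\<Phi> \<inter> span (\<Delta> - {a})) (\<Delta> - {a}) (X - N \<inter> span (\<Delta> - {a}))" using S3.IH by blast
  moreover have "((X - N) \<inter> span (\<Delta> - {a})) \<inter> (\<Phi> \<inter> span (\<Delta> - {a})) \<inter> span (\<Delta> - {a})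
     = (X - N \<inter> span (\<Delta> - {a})) \<inter> (\<Phi> \<inter> span (\<Delta> - {a})) \<inter> span (\<Delta> - {a})" by blast
  ultimately have r: "sep_set (\<Phi> \<inter> span (\<Delta> - {a})) (\<Delta> - {a}) ((X - N) \<inter> span (\<Delta> - {a}))"
    using sep_inv by blast
  let ?U = "{b \<in> pos_roots \<Phi> \<Delta>. root_le \<Delta> a b}"
  have UX: "?U \<subseteq> X" using S3.prems by blast
  have "?U \<subseteq> X - N \<or> ?U \<inter> (X - N) = {}" using S3.hyps(4) UX by blast
  then show ?case using sep_set.S3[OF S3.hyps(1,2) r] by blast
qed

lemma dyn_edge_sym: "dyn_edge a b \<Longrightarrow> dyn_edge b a"
  unfolding dyn_edge_def by metis

definition ER :: "'a::euclidean_space set \<Rightarrow> ('a \<times> 'a) set" where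
  "ER S = {(a, b). a \<in> S \<and> b \<in> S \<and> dyn_edge a b}"

lemma dyn_connected_ER: "dyn_connected S \<longleftrightarrow> S \<noteq> {} \<and> (\<forall>x\<in>S. \<forall>y\<in>S. (x, y) \<in> (ER S)\<^sup>*)"
  unfolding dyn_connected_def ER_def by simp

lemma ER_mono: "S \<subseteq> T \<Longrightarrow> (x, y) \<in> (ER S)\<^sup>* \<Longrightarrow> (x, y) \<in> (ER T)\<^sup>*"
proof -
  assume "S \<subseteq> T"
  then have "ER S \<subseteq> ER T" unfolding ER_def by blast
  then show "(x, y) \<in> (ER S)\<^sup>* \<Longrightarrow> (x, y) \<in> (ER T)\<^sup>*" using rtrancl_mono by blast
qed

lemma conn_union:
  assumes A: "dyn_connected A" and B: "dyn_connected B"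
    and link: "\<exists>x0\<in>A. \<exists>y0\<in>B. x0 = y0 \<or> dyn_edge x0 y0"
  shows "dyn_connected (A \<union> B)"
proof -
  obtain x0 y0 where xy: "x0 \<in> A" "y0 \<in> B" "x0 = y0 \<or> dyn_edge x0 y0" using link by blast
  let ?R = "(ER (A \<union> B))\<^sup>*"
  have inA: "\<And>x y. x \<in> A \<Longrightarrow> y \<in> A \<Longrightarrow> (x, y) \<in> ?R"
    using A ER_mono[of A "A \<union> B"] unfolding dyn_connected_ER by blast
  have inB: "\<And>x y. x \<in> B \<Longrightarrow> y \<in> B \<Longrightarrow> (x, y) \<in> ?R"
    using B ER_mono[of B "A \<union> B"] unfolding dyn_connected_ER by blast
  have l1: "(x0, y0) \<in> ?R"
  proof (cases "x0 = y0")
    case True then show ?thesis by simp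
  next
    case False
    then have "(x0, y0) \<in> ER (A \<union> B)" using xy unfolding ER_def by auto
    then show ?thesis by blast
  qed
  have l2: "(y0, x0) \<in> ?R"
  proof (cases "x0 = y0")
    case True then show ?thesis by simp
  next
    case False
    then have "(y0, x0) \<in> ER (A \<union> B)" using xy dyn_edge_sym unfolding ER_def by auto
    then show ?thesis by blast
  qed
  have "\<forall>x\<in>A \<union> B. \<forall>y\<in>A \<union> B. (x, y) \<in> ?R"
  proof (intro ballI)
    fix x y assume x: "x \<in> A \<union> B" and y: "y \<in> A \<union> B"
    show "(x, y) \<in> ?R"
    proof (cases "x \<in> A")
      case xA: True
      show ?thesis
      proof (cases "y \<in> A")
        case True then show ?thesis using inA xA by blast
      next
        case False
        then have yB: "y \<in> B" using y by blast
        have "(x, x0) \<in> ?R" using inA xA xy by blast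
        moreover have "(y0, y) \<in> ?R" using inB yB xy by blast
        ultimately show ?thesis using l1 rtrancl_trans by metis
      qed
    next
      case False
      then have xB: "x \<in> B" using x by blast
      show ?thesis
      proof (cases "y \<in> B")
        case True then show ?thesis using inB xB by blast
      next
        case False
        then have yA: "y \<in> A" using y by blast
        have "(x, y0) \<in> ?R" using inB xB xy by blast
        moreover have "(x0, y) \<in> ?R" using inA yA xy by blast
        ultimately show ?thesis using l2 rtrancl_trans by metis
      qed
    qed
  qed
  moreover have "A \<union> B \<noteq> {}" using A unfolding dyn_connected_def by blast
  ultimately show ?thesis unfolding dyn_connected_ER by blast
qed

lemma comp_absorb:
  assumes C: "C \<in> dyn_components D" and J: "J \<subseteq> D" "dyn_connected J"
    and link: "\<exists>x0\<in>J. \<exists>y0\<in>C. x0 = y0 \<or> dyn_edge x0 y0"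
  shows "J \<subseteq> C"
proof -
  have Cc: "dyn_connected C" "C \<subseteq> D" using C unfolding dyn_components_def by auto
  have "dyn_connected (J \<union> C)" using conn_union[OF J(2) Cc(1) link] .
  moreover have "C \<subseteq> J \<union> C" "J \<union> C \<subseteq> D" using Cc J by auto
  ultimately have "J \<union> C = C" using C unfolding dyn_components_def by blast
  then show ?thesis by blast
qed

lemma conn_ne: "dyn_connected J \<Longrightarrow> J \<noteq> {}" unfolding dyn_connected_def by blast


lemma mono_sorted: "monotonic_order Js N \<Longrightarrow> sorted_wrt (\<lambda>I J. \<not> I \<subseteq> J) Js"
  unfolding monotonic_order_def sorted_wrt_iff_nth_less
proof (intro allI impI)
  fix i j assume h: "distinct Js \<and> set Js = N \<and>
     (\<forall>i<length Js. \<forall>j<length Js. i \<noteq> j \<and> Js ! j \<subseteq> Js ! i \<longrightarrow> i < j)"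
    and ij: "i < j" "j < length Js"
  show "\<not> Js ! i \<subseteq> Js ! j"
  proof
    assume "Js ! i \<subseteq> Js ! j"
    then have "j < i" using h ij by auto
    then show False using ij by simp
  qed
qed

lemma sorted_mono: "distinct Js \<Longrightarrow> sorted_wrt (\<lambda>I J. \<not> I \<subseteq> J) Js \<Longrightarrow> monotonic_order Js (set Js)"
  unfolding monotonic_order_def sorted_wrt_iff_nth_less
proof (intro conjI refl allI impI)
  fix i j assume d: "distinct Js" and s: "\<forall>i j. i < j \<longrightarrow> j < length Js \<longrightarrow> \<not> Js ! i \<subseteq> Js ! j"
    and ij: "i < length Js" "j < length Js" "i \<noteq> j \<and> Js ! j \<subseteq> Js ! i"
  show "i < j"
  proof (rule ccontr)
    assume "\<not> i < j"
    then have "j < i" using ij by simp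
    then show False using s ij by blast
  qed
qed (simp)

lemma mono_filter: "monotonic_order Js N \<Longrightarrow> monotonic_order (filter P Js) {J\<in>N. P J}"
proof -
  assume m: "monotonic_order Js N"
  have "distinct (filter P Js)" using m unfolding monotonic_order_def by simp
  moreover have "sorted_wrt (\<lambda>I J. \<not> I \<subseteq> J) (filter P Js)" using mono_sorted[OF m] sorted_wrt_filter by blast
  ultimately have "monotonic_order (filter P Js) (set (filter P Js))" by (rule sorted_mono)
  moreover have "set (filter P Js) = {J\<in>N. P J}" using m unfolding monotonic_order_def by auto
  ultimately show ?thesis by simp
qed

lemma mono_Cons: "monotonic_order (D # Js) N \<Longrightarrow> monotonic_order Js (N - {D})"
proof -
  assume m: "monotonic_order (D # Js) N"
  have "distinct Js" using m unfolding monotonic_order_def by simp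
  moreover have "sorted_wrt (\<lambda>I J. \<not> I \<subseteq> J) Js" using mono_sorted[OF m] by simp
  ultimately have "monotonic_order Js (set Js)" by (rule sorted_mono)
  moreover have "set Js = N - {D}" using m unfolding monotonic_order_def by auto
  ultimately show ?thesis by simp
qed

lemma mono_set: "monotonic_order Js N \<Longrightarrow> set Js = N"
  unfolding monotonic_order_def by simp

lemma mono_head:
  assumes m: "monotonic_order Js N" and D: "D \<in> N" and sub: "\<forall>J\<in>N. J \<subseteq> D"
  shows "\<exists>Js'. Js = D # Js'"
proof -
  have "D \<in> set Js" using m D unfolding monotonic_order_def by simp
  from split_list[OF this] obtain xs ys where xy: "Js = xs @ D # ys" by blast
  have "xs = []"
  proof (rule ccontr)
    assume "xs \<noteq> []"
    then have I: "hd xs \<in> set xs" by simp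
    define I where "I = hd xs"
    note I = I[folded I_def]
    have "sorted_wrt (\<lambda>I J. \<not> I \<subseteq> J) (xs @ D # ys)" using mono_sorted[OF m] xy by simp
    then have "\<forall>x\<in>set xs. \<forall>y\<in>set (D # ys). \<not> x \<subseteq> y" unfolding sorted_wrt_append by blast
    then have "\<not> I \<subseteq> D" using I by simp
    moreover have "I \<in> set Js" using I xy by simp
    ultimately show False using sub mono_set[OF m] by blast
  qed
  then show ?thesis using xy by simp
qed


lemma nested_subfam:
  assumes ns: "nested_set D N" and sub: "N' \<subseteq> N" and D': "\<forall>J\<in>N'. J \<subseteq> D'"
  shows "nested_set D' N'"
proof -
  have c1: "\<forall>J\<in>N. J \<subseteq> D \<and> dyn_connected J"
   and c2: "\<forall>I\<in>N. \<forall>J\<in>N. I \<subseteq> J \<or> J \<subseteq> I \<or> I \<inter> J = {}"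
   and c3: "\<forall>K \<subseteq> N. 2 \<le> card K \<and> (\<forall>I\<in>K. \<forall>J\<in>K. I \<noteq> J \<longrightarrow> I \<inter> J = {}) \<longrightarrow> \<not> dyn_connected (\<Union>K)"
    using ns unfolding nested_set_def by argo+
  have d1: "\<forall>J\<in>N'. J \<subseteq> D' \<and> dyn_connected J" using c1 sub D' by blast
  have d2: "\<forall>I\<in>N'. \<forall>J\<in>N'. I \<subseteq> J \<or> J \<subseteq> I \<or> I \<inter> J = {}" using c2 sub by blast
  have d3: "\<forall>K \<subseteq> N'. 2 \<le> card K \<and> (\<forall>I\<in>K. \<forall>J\<in>K. I \<noteq> J \<longrightarrow> I \<inter> J = {}) \<longrightarrow> \<not> dyn_connected (\<Union>K)"
  proof (intro allI impI)
    fix K assume K: "K \<subseteq> N'" and h: "2 \<le> card K \<and> (\<forall>I\<in>K. \<forall>J\<in>K. I \<noteq> J \<longrightarrow> I \<inter> J = {})"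
    have "K \<subseteq> N" using K sub by blast
    then show "\<not> dyn_connected (\<Union>K)" using c3 h by blast
  qed
  show ?thesis unfolding nested_set_def using d1 d2 d3 by blast
qed

lemma free_vertex:
  assumes fin: "finite D" and ne: "D \<noteq> {}" and con: "dyn_connected D"
    and ns: "nested_set D N" and nD: "D \<notin> N"
  shows "\<exists>a\<in>D. \<forall>J\<in>N. a \<notin> J"
proof (rule ccontr)
  assume "\<not> ?thesis"
  then have cover: "\<forall>a\<in>D. \<exists>J\<in>N. a \<in> J" by blast
  have sub0: "\<forall>J\<in>N. J \<subseteq> D \<and> dyn_connected J"
   and N2: "\<forall>I\<in>N. \<forall>J\<in>N. I \<subseteq> J \<or> J \<subseteq> I \<or> I \<inter> J = {}"
   and N3: "\<forall>K \<subseteq> N. 2 \<le> card K \<and> (\<forall>I\<in>K. \<forall>J\<in>K. I \<noteq> J \<longrightarrow> I \<inter> J = {}) \<longrightarrow> \<not> dyn_connected (\<Union>K)"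
    using ns unfolding nested_set_def by argo+
  have sub: "\<forall>J\<in>N. J \<subseteq> D" using sub0 by blast
  have "N \<subseteq> Pow D" using sub by blast
  then have finN: "finite N" by (rule finite_subset) (simp add: fin)
  define M where "M = {J\<in>N. \<forall>I\<in>N. J \<subseteq> I \<longrightarrow> I = J}"
  have MN: "M \<subseteq> N" unfolding M_def by blast
  have finM: "finite M" using MN finN by (rule finite_subset)
  have up: "\<exists>I\<in>M. J \<subseteq> I" if J: "J \<in> N" for J
  proof -
    let ?S = "{I\<in>N. J \<subseteq> I}"
    have fS: "finite ?S" using finN by simp
    have neS: "?S \<noteq> {}" using J by blast
    have fS': "finite (card ` ?S)" using fS by simp
    have neS': "card ` ?S \<noteq> {}" using neS by simp
    have "Max (card ` ?S) \<in> card ` ?S" using Max_in[OF fS' neS'] .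
    then obtain I where I0': "Max (card ` ?S) = card I" "I \<in> ?S" by (rule imageE)
    then have I0: "I \<in> ?S" "card I = Max (card ` ?S)" by simp_all
    have "\<forall>I'\<in>?S. card I' \<le> card I" using I0(2) Max_ge[OF fS'] by simp
    note I = I0(1) this
    have "I \<in> M"
      unfolding M_def
    proof (intro CollectI conjI ballI impI)
      show "I \<in> N" using I by blast
    next
      fix I' assume I': "I' \<in> N" "I \<subseteq> I'"
      then have "I' \<in> ?S" using I by blast
      then have "card I' \<le> card I" using I by blast
      moreover have "I' \<subseteq> D" using I' sub by blast
      then have "finite I'" using fin by (rule finite_subset)
      ultimately show "I' = I" using card_seteq[OF _ I'(2)] by simp
    qed
    then show ?thesis using I by blast
  qed
  have UM: "\<Union>M = D"
  proof
    show "\<Union>M \<subseteq> D" using MN sub by blast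
  next
    show "D \<subseteq> \<Union>M"
    proof
      fix a assume "a \<in> D"
      then obtain J where "J \<in> N" "a \<in> J" using cover by blast
      then obtain I where "I \<in> M" "J \<subseteq> I" using up by blast
      then show "a \<in> \<Union>M" using \<open>a \<in> J\<close> by blast
    qed
  qed
  have disj: "\<forall>I\<in>M. \<forall>J\<in>M. I \<noteq> J \<longrightarrow> I \<inter> J = {}"
  proof (intro ballI impI)
    fix I J assume I: "I \<in> M" and J: "J \<in> M" and ne: "I \<noteq> J"
    have "I \<subseteq> J \<or> J \<subseteq> I \<or> I \<inter> J = {}" using N2 I J MN by blast
    moreover have "\<not> I \<subseteq> J" using I J ne unfolding M_def by blast
    moreover have "\<not> J \<subseteq> I" using I J ne unfolding M_def by blast
    ultimately show "I \<inter> J = {}" by blast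
  qed
  show False
  proof (cases "2 \<le> card M")
    case True
    have "2 \<le> card M \<and> (\<forall>I\<in>M. \<forall>J\<in>M. I \<noteq> J \<longrightarrow> I \<inter> J = {})" using True disj by blast
    then have "\<not> dyn_connected (\<Union>M)" using N3 MN by blast
    then show False using UM con by simp
  next
    case False
    then have "card M = 0 \<or> card M = 1" by linarith
    then show False
    proof
      assume "card M = 0"
      then have "M = {}" using finM by simp
      then show False using UM ne by simp
    next
      assume "card M = 1"
      then obtain J where "M = {J}" using card_1_singletonE by blast
      then have "J = D" "J \<in> N" using UM MN by auto
      then show False using nD by simp
    qed
  qed
qed


lemma np_Nil: "nested_product [] = id" by (simp add: nested_product_def)
lemma np_Cons: "nested_product (J # Js) = longest J \<circ> nested_product Js"
  by (simp add: nested_product_def)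

context rs begin

lemma comb_sub_cf: assumes C: "C \<subseteq> \<Delta>" and x: "x = (\<Sum>d\<in>C. c d *\<^sub>R d)" and d: "d \<in> \<Delta>"
  shows "cf x d = (if d \<in> C then c d else 0)"
proof -
  have "(\<Sum>d\<in>\<Delta>. (if d \<in> C then c d else 0) *\<^sub>R d) = (\<Sum>d\<in>C. (if d \<in> C then c d else 0) *\<^sub>R d)"
    using C fin_D by (intro sum.mono_neutral_right) auto
  also have "\<dots> = x" unfolding x by (rule sum.cong) auto
  finally have "x = (\<Sum>d\<in>\<Delta>. (if d \<in> C then c d else 0) *\<^sub>R d)" by simp
  from cf_eq[OF this d] show ?thesis .
qed

lemma nonneg_sub_cf: assumes C: "C \<subseteq> \<Delta>" and n: "nonneg_comb C x" and d: "d \<in> \<Delta>"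
  shows "cf x d \<ge> 0"
proof -
  obtain c where c: "\<forall>a\<in>C. c a \<ge> 0" "x = (\<Sum>a\<in>C. c a *\<^sub>R a)" using n unfolding nonneg_comb_def by blast
  show ?thesis using comb_sub_cf[OF C c(2) d] c(1) by simp
qed

lemma pos_sub_P: assumes "\<Phi>' \<subseteq> \<Phi>" "C \<subseteq> \<Delta>" shows "pos_roots \<Phi>' C \<subseteq> P"
proof
  fix b assume "b \<in> pos_roots \<Phi>' C"
  then have b: "b \<in> \<Phi>" "nonneg_comb C b" using assms unfolding pos_roots_def by auto
  then have "\<forall>d\<in>\<Delta>. cf b d \<ge> 0" using nonneg_sub_cf[OF assms(2)] by blast
  then show "b \<in> P" using P_cf b by blast
qed

lemma up_cf: assumes E: "E \<subseteq> \<Delta>" and a: "a \<in> E" and r: "root_le E a b" and b: "b \<in> span \<Delta>"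
  shows "cf b a \<ge> 1"
proof -
  have aD: "a \<in> \<Delta>" using E a by blast
  have as: "a \<in> span \<Delta>" using aD D_span by blast
  have "cf (b - a) a \<ge> 0" using nonneg_sub_cf[OF E _ aD] r unfolding root_le_def by blast
  moreover have "cf b a = cf (b - a) a + cf a a"
    using cf_add[OF span_diff[OF b as] as aD] by simp
  moreover have "cf a a = 1" using cf_base[OF aD aD] by simp
  ultimately show ?thesis by linarith
qed

lemma noedge_orth: assumes a: "a \<in> \<Delta>" and b: "b \<in> \<Delta>" and ne: "a \<noteq> b" and ne2: "\<not> dyn_edge a b"
  shows "a \<bullet> b = 0"
proof (rule ccontr)
  assume nz: "a \<bullet> b \<noteq> 0"
  have a0: "a \<noteq> 0" and b0: "b \<noteq> 0" using a b zero_nD by auto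
  have comm: "rrefl a \<circ> rrefl b = rrefl b \<circ> rrefl a" using ne ne2 unfolding dyn_edge_def by blast
  define u where "u = rrefl b a"
  have "rrefl a u = rrefl b (rrefl a a)" using comm unfolding u_def by (metis comp_apply)
  also have "\<dots> = rrefl b (- a)" using rrefl_self[OF a0] by simp
  also have "\<dots> = - u" unfolding u_def using linear_neg[OF linear_rrefl] by blast
  finally have eq: "rrefl a u = - u" .
  define t where "t = 2 * (u \<bullet> a) / (a \<bullet> a)"
  have "u - t *\<^sub>R a = - u" using eq unfolding rrefl_def t_def by simp
  then have "2 *\<^sub>R u = t *\<^sub>R a" by (simp add: algebra_simps scaleR_2)
  then have u_eq: "u = (t / 2) *\<^sub>R a" by (metis scaleR_scaleR divide_inverse_commute
      mult.commute nonzero_mult_div_cancel_left scaleR_one zero_neq_numeral divide_self_if)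
  define k where "k = 2 * (a \<bullet> b) / (b \<bullet> b)"
  have k0: "k \<noteq> 0" using nz b0 unfolding k_def by simp
  have "u = a - k *\<^sub>R b" unfolding u_def rrefl_def k_def by simp
  then have "k *\<^sub>R b = (1 - t / 2) *\<^sub>R a" using u_eq by (simp add: algebra_simps)
  then have "b = ((1 - t / 2) / k) *\<^sub>R a" using k0
    by (metis divide_inverse_commute scaleR_scaleR inverse_eq_divide
        left_inverse scaleR_one mult.commute)
  then have "b \<in> span {a}" by (simp add: span_base span_scale)
  then have "cf b b = 0" using span_sub_cf[of "{a}" b b] a b ne by auto
  moreover have "cf b b = 1" using cf_base[OF b b] by simp
  ultimately show False by simp
qed

lemma longest_ww: assumes "J \<subseteq> \<Delta>" shows "\<exists>ys. set ys \<subseteq> J \<and> longest J = weyl_word ys"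
proof -
  have "longest J \<in> parabolic J" using longest_par[OF assms] .
  then show ?thesis unfolding parabolic_def by blast
qed

lemma np_par: "\<forall>J\<in>set Js. J \<subseteq> K \<Longrightarrow> K \<subseteq> \<Delta> \<Longrightarrow> \<exists>xs. set xs \<subseteq> K \<and> nested_product Js = weyl_word xs"
proof (induction Js)
  case Nil
  show ?case by (rule exI[of _ "[]"]) (simp add: np_Nil)
next
  case (Cons J Js)
  obtain xs where xs: "set xs \<subseteq> K" "nested_product Js = weyl_word xs" using Cons by auto
  have JD: "J \<subseteq> \<Delta>" using Cons.prems by auto
  obtain ys where ys: "set ys \<subseteq> J" "longest J = weyl_word ys" using longest_ww[OF JD] by blast
  have "nested_product (J # Js) = weyl_word (ys @ xs)" using xs ys by (simp add: np_Cons ww_append)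
  moreover have "set (ys @ xs) \<subseteq> K" using xs ys Cons.prems by auto
  ultimately show ?case by blast
qed

lemma np_restrict:
  assumes C: "C \<subseteq> \<Delta>"
  shows "\<forall>J\<in>set Js. J \<subseteq> \<Delta> \<and> (J \<subseteq> C \<or> (\<forall>x\<in>J. \<forall>y\<in>C. x \<bullet> y = 0)) \<Longrightarrow> b \<in> span C \<Longrightarrow>
    nested_product Js b = nested_product (filter (\<lambda>J. J \<subseteq> C) Js) b"
proof (induction Js)
  case Nil then show ?case by simp
next
  case (Cons J Js)
  let ?y = "nested_product Js b"
  have IH: "?y = nested_product (filter (\<lambda>J. J \<subseteq> C) Js) b" using Cons by simp
  have "\<forall>J\<in>set (filter (\<lambda>J. J \<subseteq> C) Js). J \<subseteq> C" by simp
  then obtain xs where xs: "set xs \<subseteq> C" "nested_product (filter (\<lambda>J. J \<subseteq> C) Js) = weyl_word xs"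
    using np_par C by blast
  have ys: "?y \<in> span C" using IH xs ww_span[OF xs(1) Cons.prems(2)] by simp
  have JD: "J \<subseteq> \<Delta>" using Cons.prems by simp
  show ?case
  proof (cases "J \<subseteq> C")
    case True
    then show ?thesis using IH by (simp add: np_Cons)
  next
    case False
    then have orth: "\<forall>x\<in>J. \<forall>y\<in>C. x \<bullet> y = 0" using Cons.prems by auto
    obtain zs where zs: "set zs \<subseteq> J" "longest J = weyl_word zs" using longest_ww[OF JD] by blast
    have "\<forall>a\<in>J. ?y \<bullet> a = 0"
    proof
      fix a assume a: "a \<in> J"
      have "orthogonal a ?y"
        by (rule orthogonal_to_span[OF ys]) (use orth a in \<open>simp add: orthogonal_def\<close>)
      then show "?y \<bullet> a = 0" by (simp add: orthogonal_def inner_commute)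
    qed
    then have "longest J ?y = ?y" using zs ww_orth by simp
    then show ?thesis using IH False by (simp add: np_Cons)
  qed
qed

lemma flip: assumes E: "E \<subseteq> \<Delta>" and c: "c \<in> \<Phi>" "c \<in> span E"
  shows "-(longest E c) \<in> P \<longleftrightarrow> -c \<notin> P"
proof (cases "-c \<in> P")
  case True
  have "-c \<in> span E" using c span_neg by blast
  then have "-(longest E (-c)) \<in> P" using longest_neg[OF E True] by blast
  moreover obtain ys where ys: "set ys \<subseteq> E" "longest E = weyl_word ys" using longest_ww[OF E] by blast
  ultimately have "longest E c \<in> P" by (simp add: ww_neg)
  then have "-(longest E c) \<notin> P" using not_both by blast
  then show ?thesis using True by blast
next
  case False
  then have "c \<in> P" using dich c by blast
  then have "-(longest E c) \<in> P" using longest_neg[OF E] c by blast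
  then show ?thesis using False by blast
qed

end

context rs begin

lemma main:
  assumes "E \<subseteq> \<Delta>" "E \<noteq> {}" "nested_set E N" "monotonic_order Js N"
  shows "sep_set (\<Phi> \<inter> span E) E (I (nested_product Js))"
  using assms
proof (induction "card E" arbitrary: E N Js rule: less_induct)
  case less
  note ED = less.prems(1) and Ene = less.prems(2) and ns = less.prems(3) and mo = less.prems(4)
  have finE: "finite E" using ED fin_D by (rule finite_subset)
  have NE: "\<forall>J\<in>N. J \<subseteq> E \<and> dyn_connected J" using ns unfolding nested_set_def by argo
  have setJs: "set Js = N" using mono_set[OF mo] .
  let ?w = "nested_product Js"
  show ?case
  proof (cases "card E = 1")
    case True
    then show ?thesis by (rule sep_set.S1)
  next
    case card1: False
    show ?thesis
    proof (cases "dyn_connected E")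
      case False
      show ?thesis
      proof (rule sep_set.S2[OF Ene False], rule ballI)
        fix C assume C: "C \<in> dyn_components E"
        have CE: "C \<subseteq> E" and Cc: "dyn_connected C" using C unfolding dyn_components_def by auto
        have CneE: "C \<noteq> E" using Cc False by blast
        have cardC: "card C < card E" using CE CneE finE by (meson psubsetI psubset_card_mono)
        have CD: "C \<subseteq> \<Delta>" using CE ED by blast
        have Cne: "C \<noteq> {}" using conn_ne[OF Cc] .
        let ?NC = "{J\<in>N. J \<subseteq> C}"
        let ?JC = "filter (\<lambda>J. J \<subseteq> C) Js"
        have nsC: "nested_set C ?NC" by (rule nested_subfam[OF ns]) auto
        have moC: "monotonic_order ?JC ?NC" using mono_filter[OF mo] .
        have IH: "sep_set (\<Phi> \<inter> span C) C (I (nested_product ?JC))"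
          using less.hyps[OF cardC CD Cne nsC moC] .
        have cond: "\<forall>J\<in>set Js. J \<subseteq> \<Delta> \<and> (J \<subseteq> C \<or> (\<forall>x\<in>J. \<forall>y\<in>C. x \<bullet> y = 0))"
        proof
          fix J assume "J \<in> set Js"
          then have J: "J \<in> N" using setJs by simp
          have JE: "J \<subseteq> E" and Jc: "dyn_connected J" using NE J by auto
          have JD: "J \<subseteq> \<Delta>" using JE ED by blast
          show "J \<subseteq> \<Delta> \<and> (J \<subseteq> C \<or> (\<forall>x\<in>J. \<forall>y\<in>C. x \<bullet> y = 0))"
          proof (cases "\<exists>x0\<in>J. \<exists>y0\<in>C. x0 = y0 \<or> dyn_edge x0 y0")
            case True
            then have "J \<subseteq> C" using comp_absorb[OF C JE Jc] by blast
            then show ?thesis using JD by blast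
          next
            case False
            have "\<forall>x\<in>J. \<forall>y\<in>C. x \<bullet> y = 0"
            proof (intro ballI)
              fix x y assume x: "x \<in> J" and y: "y \<in> C"
              have "x \<noteq> y" "\<not> dyn_edge x y" using False x y by auto
              moreover have "x \<in> \<Delta>" "y \<in> \<Delta>" using x y JD CD by auto
              ultimately show "x \<bullet> y = 0" using noedge_orth by blast
            qed
            then show ?thesis using JD by blast
          qed
        qed
        have agree: "(I ?w \<inter> span C) \<inter> (\<Phi> \<inter> span C) \<inter> span C
            = I (nested_product ?JC) \<inter> (\<Phi> \<inter> span C) \<inter> span C"
        proof (intro set_eqI iffI)
          fix b assume "b \<in> (I ?w \<inter> span C) \<inter> (\<Phi> \<inter> span C) \<inter> span C"
          moreover from this have "?w b = nested_product ?JC b" using np_restrict[OF CD cond] by blast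
          ultimately show "b \<in> I (nested_product ?JC) \<inter> (\<Phi> \<inter> span C) \<inter> span C"
            unfolding inv_set_def by simp
        next
          fix b assume "b \<in> I (nested_product ?JC) \<inter> (\<Phi> \<inter> span C) \<inter> span C"
          moreover from this have "?w b = nested_product ?JC b" using np_restrict[OF CD cond] by blast
          ultimately show "b \<in> (I ?w \<inter> span C) \<inter> (\<Phi> \<inter> span C) \<inter> span C"
            unfolding inv_set_def by simp
        qed
        have "sep_set (\<Phi> \<inter> span C) C (I ?w \<inter> span C)" using sep_inv[OF IH agree] .
        moreover have "\<Phi> \<inter> span E \<inter> span C = \<Phi> \<inter> span C" using span_mono[OF CE] by blast
        ultimately show "sep_set (\<Phi> \<inter> span E \<inter> span C) C (I ?w \<inter> span C)" by simp
      qed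
    next
      case conn: True
      have card2: "card E \<ge> 2" using card1 Ene finE by (metis One_nat_def Suc_1 card_0_eq less_2_cases not_less)
      have cardm: "\<And>a. a \<in> E \<Longrightarrow> card (E - {a}) < card E" using finE by (meson card_Diff1_less)
      have nem: "\<And>a. a \<in> E \<Longrightarrow> E - {a} \<noteq> {}"
      proof -
        fix a assume "a \<in> E"
        then have "card (E - {a}) = card E - 1" using finE by simp
        then have "card (E - {a}) \<ge> 1" using card2 by linarith
        then show "E - {a} \<noteq> {}" by (metis card.empty not_one_le_zero)
      qed
      have EmD: "\<And>a. E - {a} \<subseteq> \<Delta>" using ED by blast
      have span_m: "\<And>a. span (E - {a}) \<subseteq> span E" by (rule span_mono) blast
      show ?thesis
      proof (cases "E \<in> N")
        case True
        obtain Js' where Js': "Js = E # Js'" using mono_head[OF mo True] NE by blast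
        let ?N' = "N - {E}"
        have mo': "monotonic_order Js' ?N'" using mono_Cons mo Js' by blast
        have ns': "nested_set E ?N'" by (rule nested_subfam[OF ns]) (use NE in auto)
        have nEN': "E \<notin> ?N'" by blast
        obtain a where aE: "a \<in> E" and afree: "\<forall>J\<in>?N'. a \<notin> J"
          using free_vertex[OF finE Ene conn ns' nEN'] by blast
        let ?E' = "E - {a}"
        have aD: "a \<in> \<Delta>" using aE ED by blast
        have ns'': "nested_set ?E' ?N'" by (rule nested_subfam[OF ns]) (use NE afree in auto)
        have IH: "sep_set (\<Phi> \<inter> span ?E') ?E' (I (nested_product Js'))"
          using less.hyps[OF cardm[OF aE] EmD nem[OF aE] ns'' mo'] .
        have "\<forall>C\<subseteq>?E'. pos_roots (\<Phi> \<inter> span ?E') C \<subseteq> P"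
        proof (intro allI impI)
          fix C assume "C \<subseteq> ?E'"
          then have "C \<subseteq> \<Delta>" using EmD by blast
          then show "pos_roots (\<Phi> \<inter> span ?E') C \<subseteq> P" by (intro pos_sub_P) auto
        qed
        then have IHc: "sep_set (\<Phi> \<inter> span ?E') ?E' (P - I (nested_product Js'))"
          using sep_compl[OF IH] by blast
        have "\<forall>J\<in>set Js'. J \<subseteq> ?E'" using mo' NE afree unfolding monotonic_order_def by auto
        from np_par[OF this EmD] obtain xs where xs: "set xs \<subseteq> ?E'" "nested_product Js' = weyl_word xs"
          by blast
        have xsD: "set xs \<subseteq> \<Delta>" using xs ED by auto
        have wb: "\<And>b. ?w b = longest E (weyl_word xs b)" using Js' xs by (simp add: np_Cons)
        have agree: "(I ?w \<inter> span ?E') \<inter> (\<Phi> \<inter> span ?E') \<inter> span ?E'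
            = (P - I (nested_product Js')) \<inter> (\<Phi> \<inter> span ?E') \<inter> span ?E'"
        proof (intro set_eqI)
          fix b
          show "b \<in> (I ?w \<inter> span ?E') \<inter> (\<Phi> \<inter> span ?E') \<inter> span ?E' \<longleftrightarrow>
                b \<in> (P - I (nested_product Js')) \<inter> (\<Phi> \<inter> span ?E') \<inter> span ?E'"
          proof (cases "b \<in> \<Phi> \<and> b \<in> span ?E'")
            case True
            let ?c = "weyl_word xs b"
            have cPhi: "?c \<in> \<Phi>" using ww_PhiD[OF xsD] True by blast
            have "?c \<in> span ?E'" using ww_span[OF xs(1)] True by blast
            then have cE: "?c \<in> span E" using span_m by blast
            have fl: "-(longest E ?c) \<in> P \<longleftrightarrow> -?c \<notin> P" using flip[OF ED cPhi cE] .
            show ?thesis using True fl wb xs(2) unfolding inv_set_def by auto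
          next
            case False
            then show ?thesis by blast
          qed
        qed
        have rec: "sep_set (\<Phi> \<inter> span ?E') ?E' (I ?w \<inter> span ?E')" using sep_inv[OF IHc agree] .
        have "\<Phi> \<inter> span E \<inter> span ?E' = \<Phi> \<inter> span ?E'" using span_m by blast
        then have rec': "sep_set (\<Phi> \<inter> span E \<inter> span ?E') ?E' (I ?w \<inter> span ?E')" using rec by simp
        let ?U = "{b \<in> pos_roots (\<Phi> \<inter> span E) E. root_le E a b}"
        have "?U \<subseteq> I ?w"
        proof
          fix b assume b: "b \<in> ?U"
          have bPhi: "b \<in> \<Phi>" and bE: "b \<in> span E" using b pos_roots_span by auto
          have bs: "b \<in> span \<Delta>" using bPhi Phi_span by blast
          have "b \<in> pos_roots (\<Phi> \<inter> span E) E" using b by blast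
          moreover have "pos_roots (\<Phi> \<inter> span E) E \<subseteq> P" by (rule pos_sub_P) (use ED in auto)
          ultimately have bP: "b \<in> P" by blast
          have ca: "cf b a \<ge> 1" using up_cf[OF ED aE _ bs] b by blast
          let ?c = "weyl_word xs b"
          have "cf ?c a = cf b a" using ww_cf[OF xs(1) EmD bs] aD by blast
          moreover have cPhi: "?c \<in> \<Phi>" using ww_PhiD[OF xsD bPhi] .
          ultimately have cP: "?c \<in> P" using pos_by_cf[OF cPhi aD] ca by simp
          have xsE: "set xs \<subseteq> E" using xs by blast
          have cE: "?c \<in> span E" using ww_span[OF xsE bE] .
          have "-(longest E ?c) \<in> P" using longest_neg[OF ED cP cE] .
          then show "b \<in> I ?w" using bP wb unfolding inv_set_def by simp
        qed
        then show ?thesis using sep_set.S3[OF conn aE rec'] by blast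
      next
        case False
        obtain a where aE: "a \<in> E" and afree: "\<forall>J\<in>N. a \<notin> J"
          using free_vertex[OF finE Ene conn ns False] by blast
        let ?E' = "E - {a}"
        have aD: "a \<in> \<Delta>" using aE ED by blast
        have ns'': "nested_set ?E' N" by (rule nested_subfam[OF ns]) (use NE afree in auto)
        have IH: "sep_set (\<Phi> \<inter> span ?E') ?E' (I ?w)"
          using less.hyps[OF cardm[OF aE] EmD nem[OF aE] ns'' mo] .
        have agree: "(I ?w \<inter> span ?E') \<inter> (\<Phi> \<inter> span ?E') \<inter> span ?E' = I ?w \<inter> (\<Phi> \<inter> span ?E') \<inter> span ?E'"
          by blast
        have rec: "sep_set (\<Phi> \<inter> span ?E') ?E' (I ?w \<inter> span ?E')" using sep_inv[OF IH agree] .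
        have "\<Phi> \<inter> span E \<inter> span ?E' = \<Phi> \<inter> span ?E'" using span_m by blast
        then have rec': "sep_set (\<Phi> \<inter> span E \<inter> span ?E') ?E' (I ?w \<inter> span ?E')" using rec by simp
        have "\<forall>J\<in>set Js. J \<subseteq> ?E'" using setJs NE afree by auto
        from np_par[OF this EmD] obtain xs where xs: "set xs \<subseteq> ?E'" "?w = weyl_word xs"
          by blast
        have xsD: "set xs \<subseteq> \<Delta>" using xs ED by auto
        let ?U = "{b \<in> pos_roots (\<Phi> \<inter> span E) E. root_le E a b}"
        have "?U \<inter> I ?w = {}"
        proof (rule ccontr)
          assume "?U \<inter> I ?w \<noteq> {}"
          then obtain b where b: "b \<in> ?U" "b \<in> I ?w" by blast
          have bPhi: "b \<in> \<Phi>" using b pos_roots_span by auto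
          have bs: "b \<in> span \<Delta>" using bPhi Phi_span by blast
          have ca: "cf b a \<ge> 1" using up_cf[OF ED aE _ bs] b by blast
          let ?c = "weyl_word xs b"
          have "cf ?c a = cf b a" using ww_cf[OF xs(1) EmD bs] aD by blast
          moreover have cPhi: "?c \<in> \<Phi>" using ww_PhiD[OF xsD bPhi] .
          ultimately have cP: "?c \<in> P" using pos_by_cf[OF cPhi aD] ca by simp
          have "-?c \<in> P" using b(2) xs(2) unfolding inv_set_def by simp
          then show False using cP not_both by blast
        qed
        then show ?thesis using sep_set.S3[OF conn aE rec'] by blast
      qed
    qed
  qed
qed

end

theorem lemma5p6:
  fixes \<Phi> \<Delta> :: "'a::euclidean_space set" and \<N> :: "'a set set" and Js :: "'a set list"
  assumes "root_system \<Phi>"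
    and "is_base \<Phi> \<Delta>"
    and "dyn_connected \<Delta>"
    and "nested_set \<Delta> \<N>"
    and "monotonic_order Js \<N>"
  shows "separable \<Phi> \<Delta> (nested_product Js)"
proof -
  interpret rs \<Phi> \<Delta> using assms(1,2) by unfold_locales
  have ne: "\<Delta> \<noteq> {}" using assms(3) unfolding dyn_connected_def by blast
  have "sep_set (\<Phi> \<inter> span \<Delta>) \<Delta> (inv_set \<Phi> \<Delta> (nested_product Js))"
    using main[OF order_refl ne assms(4,5)] .
  moreover have "\<Phi> \<inter> span \<Delta> = \<Phi>" using Phi_span by blast
  ultimately show ?thesis unfolding separable_def by simp
qed


end
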